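(* (Root Capacity Magnification Theorem.) Let $K$ be a perfect field and let $K\subseteq L\subseteq M$ be finite extensions inside $\bar K$. Let $F/K$ be a finite Galois extension of degree $d$ such that $M'=MF$ is obtained by strong cluster magnification from $M/K$ through $F/K$ and $L'=LF$ is obtained by strong cluster magnification from $L/K$ through $F/K$. Then $\rho_K(M',L')=d\cdot\rho_K(M,L)$.
   Context: $\bar K$ is a fixed algebraic closure of $K$; $\tilde E$ denotes the Galois closure in $\bar K$ of a finite extension $E/K$. A finite extension $M/K$ is obtained by strong cluster magnification from a subextension $L/K$ through a finite Galois extension $F/K$ if $[L:K]>2$, $\tilde L\cap F=K$, and $LF=M$; $d=[F:K]$ is the magnification factor. For finite extensions $L/K$, $M/K$, writing $L=K(\alpha)$ with minimal polynomial $f$ of $\alpha$ over $K$, the root capacity $\rho_K(M,L)$ is the number of roots of $f$ lying in $M$ (independent of the choice of $\alpha$); equivalently $\rho_K(M,L)=a\cdot r_K(L)$, where $a$ is the number of distinct subfields of $M$ isomorphic to $L$ over $K$ and $r_K(L)$ is the number of roots of $f$ in $L$. *)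

theory Defs
  imports "HOL-Computational_Algebra.Polynomial"
begin

text \<open>Ambient field: a type 'a :: field playing the role of the fixed algebraic
closure of K. Subfields of it are sets.\<close>

definition is_subfield :: "'a::field set \<Rightarrow> bool" where
  "is_subfield S \<longleftrightarrow> 0 \<in> S \<and> 1 \<in> S \<and>
     (\<forall>x\<in>S. \<forall>y\<in>S. x + y \<in> S \<and> x * y \<in> S) \<and>
     (\<forall>x\<in>S. - x \<in> S \<and> inverse x \<in> S)"

definition alg_closed :: "'a::field itself \<Rightarrow> bool" where
  "alg_closed _ \<longleftrightarrow> (\<forall>p::'a poly. degree p > 0 \<longrightarrow> (\<exists>x. poly p x = 0))"

definition poly_over :: "'a::field set \<Rightarrow> 'a poly \<Rightarrow> bool" where
  "poly_over K p \<longleftrightarrow> (\<forall>i. coeff p i \<in> K)"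

definition algebraic_over :: "'a::field set \<Rightarrow> 'a \<Rightarrow> bool" where
  "algebraic_over K x \<longleftrightarrow> (\<exists>p. p \<noteq> 0 \<and> poly_over K p \<and> poly p x = 0)"

definition min_poly :: "'a::field set \<Rightarrow> 'a \<Rightarrow> 'a poly" where
  "min_poly K x = (THE p. lead_coeff p = 1 \<and> poly_over K p \<and> poly p x = 0 \<and>
      (\<forall>q. q \<noteq> 0 \<and> poly_over K q \<and> poly q x = 0 \<longrightarrow> degree p \<le> degree q))"

text \<open>Perfect field: characteristic 0, or characteristic p with surjective Frobenius.\<close>
definition perfect_field :: "'a::field set \<Rightarrow> bool" where
  "perfect_field K \<longleftrightarrow> (\<forall>p::nat. prime p \<and> of_nat p = (0::'a) \<longrightarrow>
      (\<forall>x\<in>K. \<exists>y\<in>K. y ^ p = x))"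

definition gen_field :: "'a::field set \<Rightarrow> 'a set" where
  "gen_field S = \<Inter>{T. is_subfield T \<and> S \<subseteq> T}"

definition compositum :: "'a::field set \<Rightarrow> 'a set \<Rightarrow> 'a set" where
  "compositum L F = gen_field (L \<union> F)"

definition is_basis_over :: "'a::field set \<Rightarrow> 'a set \<Rightarrow> 'a set \<Rightarrow> bool" where
  "is_basis_over K L B \<longleftrightarrow> finite B \<and> B \<subseteq> L \<and>
     (\<forall>c. (\<forall>b\<in>B. c b \<in> K) \<and> (\<Sum>b\<in>B. c b * b) = 0 \<longrightarrow> (\<forall>b\<in>B. c b = 0)) \<and>
     L = {\<Sum>b\<in>B. c b * b | c. \<forall>b\<in>B. c b \<in> K}"

definition finite_ext :: "'a::field set \<Rightarrow> 'a set \<Rightarrow> bool" where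
  "finite_ext K L \<longleftrightarrow> is_subfield K \<and> is_subfield L \<and> K \<subseteq> L \<and> (\<exists>B. is_basis_over K L B)"

definition ext_degree :: "'a::field set \<Rightarrow> 'a set \<Rightarrow> nat" where
  "ext_degree K L = (if \<exists>B. is_basis_over K L B then card (SOME B. is_basis_over K L B) else 0)"

definition K_embedding :: "'a::field set \<Rightarrow> 'a set \<Rightarrow> ('a \<Rightarrow> 'a) \<Rightarrow> bool" where
  "K_embedding K L \<sigma> \<longleftrightarrow> (\<forall>x\<in>K. \<sigma> x = x) \<and> \<sigma> 1 = 1 \<and>
     (\<forall>x\<in>L. \<forall>y\<in>L. \<sigma> (x + y) = \<sigma> x + \<sigma> y \<and> \<sigma> (x * y) = \<sigma> x * \<sigma> y)"

definition galois_closure :: "'a::field set \<Rightarrow> 'a set \<Rightarrow> 'a set" where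
  "galois_closure K L = gen_field (K \<union> \<Union>{\<sigma> ` L | \<sigma>. K_embedding K L \<sigma>})"

definition galois_ext :: "'a::field set \<Rightarrow> 'a set \<Rightarrow> bool" where
  "galois_ext K F \<longleftrightarrow> finite_ext K F \<and>
     (\<forall>a\<in>F. \<forall>b. poly (min_poly K a) b = 0 \<longrightarrow> b \<in> F) \<and>
     (\<forall>a\<in>F. rsquarefree (min_poly K a))"

definition strong_cluster_magnification ::
    "'a::field set \<Rightarrow> 'a set \<Rightarrow> 'a set \<Rightarrow> 'a set \<Rightarrow> bool" where
  "strong_cluster_magnification K L F M \<longleftrightarrow>
     finite_ext K L \<and> galois_ext K F \<and> ext_degree K L > 2 \<and>
     galois_closure K L \<inter> F = K \<and> compositum L F = M"

definition root_capacity :: "'a::field set \<Rightarrow> 'a set \<Rightarrow> 'a set \<Rightarrow> nat" where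
  "root_capacity K M L =
     (let \<alpha> = (SOME \<alpha>. \<alpha> \<in> L \<and> gen_field (insert \<alpha> K) = L)
      in card {\<beta>\<in>M. poly (min_poly K \<alpha>) \<beta> = 0})"

end

theory Submission
  imports "HOL-Algebra.Multiplicative_Group" Defs "HOL-Computational_Algebra.Primes"
begin

section \<open>Subfields\<close>

lemma sfD:
  assumes "is_subfield S"
  shows sf0: "0 \<in> S" and sf1: "1 \<in> S"
    and sf_add: "\<And>x y. x \<in> S \<Longrightarrow> y \<in> S \<Longrightarrow> x + y \<in> S"
    and sf_mult: "\<And>x y. x \<in> S \<Longrightarrow> y \<in> S \<Longrightarrow> x * y \<in> S"
    and sf_uminus: "\<And>x. x \<in> S \<Longrightarrow> - x \<in> S"
    and sf_inverse: "\<And>x. x \<in> S \<Longrightarrow> inverse x \<in> S"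
  using assms unfolding is_subfield_def by auto

lemma sf_diff: "is_subfield S \<Longrightarrow> x \<in> S \<Longrightarrow> y \<in> S \<Longrightarrow> x - y \<in> S"
  using sf_add[of S x "- y"] sf_uminus[of S y] by simp

lemma sf_divide: "is_subfield S \<Longrightarrow> x \<in> S \<Longrightarrow> y \<in> S \<Longrightarrow> x / y \<in> S"
  using sf_mult[of S x "inverse y"] sf_inverse[of S y] by (simp add: divide_inverse)

lemma sf_power: "is_subfield S \<Longrightarrow> x \<in> S \<Longrightarrow> x ^ n \<in> S"
  by (induction n) (auto intro: sf_mult sf1)

lemma sf_sum: "is_subfield S \<Longrightarrow> (\<And>i. i \<in> A \<Longrightarrow> f i \<in> S) \<Longrightarrow> sum f A \<in> S"
  by (induction A rule: infinite_finite_induct) (auto intro: sf_add sf0)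

lemma sf_prod: "is_subfield S \<Longrightarrow> (\<And>i. i \<in> A \<Longrightarrow> f i \<in> S) \<Longrightarrow> prod f A \<in> S"
  by (induction A rule: infinite_finite_induct) (auto intro: sf_mult sf1)

lemma sf_of_nat: "is_subfield S \<Longrightarrow> of_nat n \<in> S"
  by (induction n) (auto intro: sf_add sf0 sf1)

lemma sf_UNIV: "is_subfield UNIV"
  unfolding is_subfield_def by auto

lemma sf_Int: "is_subfield A \<Longrightarrow> is_subfield B \<Longrightarrow> is_subfield (A \<inter> B)"
  unfolding is_subfield_def by auto

lemma gen_field_sf: "is_subfield (gen_field S)"
  unfolding gen_field_def is_subfield_def by auto

lemma gen_field_sup: "S \<subseteq> gen_field S"
  unfolding gen_field_def by auto

lemma gen_field_min: "is_subfield T \<Longrightarrow> S \<subseteq> T \<Longrightarrow> gen_field S \<subseteq> T"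
  unfolding gen_field_def by auto

lemma gen_field_mono: "S \<subseteq> T \<Longrightarrow> gen_field S \<subseteq> gen_field T"
  by (meson gen_field_min gen_field_sf gen_field_sup order_trans)

lemma gen_field_id: "is_subfield S \<Longrightarrow> gen_field S = S"
  by (simp add: gen_field_min gen_field_sup subset_antisym)

lemma gen_field_insert_gen: "gen_field (insert b (gen_field S)) = gen_field (insert b S)"
proof
  show "gen_field (insert b (gen_field S)) \<subseteq> gen_field (insert b S)"
    by (metis gen_field_min gen_field_mono gen_field_sf gen_field_sup insert_mono subset_insertI
         insert_subset)
  show "gen_field (insert b S) \<subseteq> gen_field (insert b (gen_field S))"
    by (rule gen_field_mono) (use gen_field_sup in blast)
qed

section \<open>Polynomials over a subfield\<close>

lemma poly_overD: "poly_over K p \<Longrightarrow> coeff p i \<in> K"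
  unfolding poly_over_def by auto

lemma poly_over_mono: "poly_over K p \<Longrightarrow> K \<subseteq> E \<Longrightarrow> poly_over E p"
  unfolding poly_over_def by auto

lemma poly_over_0: "is_subfield K \<Longrightarrow> poly_over K 0"
  unfolding poly_over_def by (auto intro: sf0)

lemma poly_over_const: "is_subfield K \<Longrightarrow> c \<in> K \<Longrightarrow> poly_over K [:c:]"
  unfolding poly_over_def by (auto intro: sf0 simp: coeff_pCons split: nat.split)

lemma poly_over_pCons: "is_subfield K \<Longrightarrow> c \<in> K \<Longrightarrow> poly_over K p \<Longrightarrow> poly_over K (pCons c p)"
  unfolding poly_over_def by (auto simp: coeff_pCons split: nat.split)

lemma poly_over_pCons_iff: "poly_over K (pCons c p) \<longleftrightarrow> c \<in> K \<and> poly_over K p"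
  unfolding poly_over_def
  by (metis coeff_pCons_0 coeff_pCons_Suc not0_implies_Suc)

lemma poly_over_add: "is_subfield K \<Longrightarrow> poly_over K p \<Longrightarrow> poly_over K q \<Longrightarrow> poly_over K (p + q)"
  unfolding poly_over_def by (auto intro: sf_add)

lemma poly_over_uminus: "is_subfield K \<Longrightarrow> poly_over K p \<Longrightarrow> poly_over K (- p)"
  unfolding poly_over_def by (auto intro: sf_uminus)

lemma poly_over_diff: "is_subfield K \<Longrightarrow> poly_over K p \<Longrightarrow> poly_over K q \<Longrightarrow> poly_over K (p - q)"
  unfolding poly_over_def by (auto intro: sf_diff)

lemma poly_over_smult: "is_subfield K \<Longrightarrow> c \<in> K \<Longrightarrow> poly_over K p \<Longrightarrow> poly_over K (smult c p)"
  unfolding poly_over_def by (auto intro: sf_mult)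

lemma poly_over_mult: "is_subfield K \<Longrightarrow> poly_over K p \<Longrightarrow> poly_over K q \<Longrightarrow> poly_over K (p * q)"
  unfolding poly_over_def by (auto simp: coeff_mult intro!: sf_sum sf_mult)

lemma poly_over_1: "is_subfield K \<Longrightarrow> poly_over K 1"
  using poly_over_const[of K 1] by (simp add: sf1 one_pCons)

lemma poly_over_X: "is_subfield K \<Longrightarrow> poly_over K [:0, 1:]"
  by (simp add: poly_over_pCons poly_over_const sf0 sf1)

lemma poly_over_power: "is_subfield K \<Longrightarrow> poly_over K p \<Longrightarrow> poly_over K (p ^ n)"
  by (induction n) (auto intro: poly_over_mult poly_over_1)

lemma poly_over_sum: "is_subfield K \<Longrightarrow> (\<And>i. i \<in> A \<Longrightarrow> poly_over K (f i)) \<Longrightarrow> poly_over K (sum f A)"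
  by (induction A rule: infinite_finite_induct) (auto intro: poly_over_add poly_over_0)

lemma poly_over_prod: "is_subfield K \<Longrightarrow> (\<And>i. i \<in> A \<Longrightarrow> poly_over K (f i)) \<Longrightarrow> poly_over K (prod f A)"
  by (induction A rule: infinite_finite_induct) (auto intro: poly_over_mult poly_over_1)

lemma poly_over_monom: "is_subfield K \<Longrightarrow> c \<in> K \<Longrightarrow> poly_over K (Polynomial.monom c n)"
  unfolding poly_over_def by (auto simp: coeff_monom intro: sf0)

lemma poly_over_pcompose: "is_subfield K \<Longrightarrow> poly_over K p \<Longrightarrow> poly_over K q \<Longrightarrow> poly_over K (pcompose p q)"
proof (induction p)
  case 0 then show ?case by (simp add: poly_over_0)
next
  case (pCons a p)
  then show ?case
    by (auto simp: pcompose_pCons poly_over_pCons_iff intro!: poly_over_add poly_over_const poly_over_mult)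
qed

lemma poly_in_sf: "is_subfield K \<Longrightarrow> poly_over K p \<Longrightarrow> x \<in> K \<Longrightarrow> poly p x \<in> K"
proof (induction p)
  case 0 then show ?case by (simp add: sf0)
next
  case (pCons a p)
  then show ?case by (auto simp: poly_over_pCons_iff intro!: sf_add sf_mult)
qed

lemma poly_over_lead_coeff: "poly_over K p \<Longrightarrow> lead_coeff p \<in> K"
  by (simp add: poly_overD)

lemma div_mod_over_exists:
  assumes K: "is_subfield K" and q: "poly_over K q" "q \<noteq> 0"
  shows "poly_over K p \<Longrightarrow> \<exists>s r. poly_over K s \<and> poly_over K r \<and> p = q * s + r \<and> (r = 0 \<or> degree r < degree q)"
proof (induction "degree p" arbitrary: p rule: less_induct)
  case less
  show ?case
  proof (cases "p = 0 \<or> degree p < degree q")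
    case True
    then show ?thesis using less.prems K by (intro exI[of _ 0] exI[of _ p]) (auto simp: poly_over_0)
  next
    case False
    hence p0: "p \<noteq> 0" and dg: "degree q \<le> degree p" by auto
    define c where "c = lead_coeff p / lead_coeff q"
    define t where "t = Polynomial.monom c (degree p - degree q)"
    define p' where "p' = p - q * t"
    have cK: "c \<in> K" unfolding c_def using K q less.prems by (auto intro: sf_divide poly_over_lead_coeff)
    have tK: "poly_over K t" unfolding t_def using K cK by (rule poly_over_monom)
    have p'K: "poly_over K p'" unfolding p'_def using K less.prems q tK by (auto intro: poly_over_diff poly_over_mult)
    have c0: "c \<noteq> 0" unfolding c_def using p0 q by auto
    have dqt: "degree (q * t) = degree p"
      unfolding t_def using c0 q dg by (simp add: degree_mult_eq degree_monom_eq)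
    have dt: "degree t = degree p - degree q" unfolding t_def by (rule degree_monom_eq[OF c0])
    have ct: "coeff t (degree p - degree q) = c" by (simp add: t_def)
    have lt: "lead_coeff t = c" using ct dt by simp
    have lqt: "lead_coeff (q * t) = lead_coeff p"
      using q(2) by (simp only: lead_coeff_mult lt) (simp add: c_def)
    have "p' = 0 \<or> degree p' < degree p"
    proof (cases "p' = 0")
      case False
      have "degree p' \<le> degree p" unfolding p'_def using dqt by (simp add: degree_diff_le)
      moreover have "coeff p' (degree p) = 0" unfolding p'_def using dqt lqt by simp
      ultimately show ?thesis using False
        by (metis le_neq_implies_less leading_coeff_0_iff)
    qed simp
    then obtain s r where sr: "poly_over K s" "poly_over K r" "p' = q * s + r" "r = 0 \<or> degree r < degree q"
    proof
      assume "p' = 0" thus ?thesis using that[of 0 0] K by (auto simp: poly_over_0)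
    next
      assume "degree p' < degree p"
      thus ?thesis using less(1)[OF _ p'K] that by blast
    qed
    have "p = q * (s + t) + r" using sr(3) unfolding p'_def by (simp add: algebra_simps)
    thus ?thesis using sr K tK by (intro exI[of _ "s + t"] exI[of _ r]) (auto intro: poly_over_add)
  qed
qed

lemma div_mod_over:
  assumes K: "is_subfield K" and q: "poly_over K q" and p: "poly_over K p"
  shows "poly_over K (p div q)" "poly_over K (p mod q)"
proof -
  have "poly_over K (p div q) \<and> poly_over K (p mod q)"
  proof (cases "q = 0")
    case True thus ?thesis using p K by (simp add: poly_over_0)
  next
    case False
    obtain s r where sr: "poly_over K s" "poly_over K r" "p = q * s + r" "r = 0 \<or> degree r < degree q"
      using div_mod_over_exists[OF K q False p] by blast
    have e: "p = q * (p div q) + p mod q" by simp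
    have m: "p mod q = 0 \<or> degree (p mod q) < degree q" using degree_mod_less[OF False] .
    have "q * (s - p div q) = p mod q - r" using e sr(3) by (simp add: algebra_simps)
    moreover have "p mod q - r = 0 \<or> degree (p mod q - r) < degree q"
    proof (cases "p mod q - r = 0")
      case False
      have "degree (p mod q - r) \<le> max (degree (p mod q)) (degree r)" by (rule degree_diff_le_max)
      moreover have "degree (p mod q) < degree q \<or> degree r < degree q \<or> degree q > 0"
        using m sr(4) False by auto
      ultimately show ?thesis using m sr(4) False by auto
    qed simp
    ultimately have "s - p div q = 0"
    proof -
      assume a: "q * (s - p div q) = p mod q - r" "p mod q - r = 0 \<or> degree (p mod q - r) < degree q"
      show "s - p div q = 0"
      proof (rule ccontr)
        assume "s - p div q \<noteq> 0"
        hence "degree q \<le> degree (q * (s - p div q))" using False by (simp add: degree_mult_eq)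
        thus False using a False \<open>s - p div q \<noteq> 0\<close> by auto
      qed
    qed
    hence "p div q = s" by simp
    moreover have "p mod q = r" using e sr(3) \<open>p div q = s\<close> by simp
    ultimately have "p div q = s" "p mod q = r" by auto
    thus ?thesis using sr by simp
  qed
  thus "poly_over K (p div q)" "poly_over K (p mod q)" by auto
qed


section \<open>Minimal polynomials over a subfield\<close>

definition mp_prop :: "'a::field set \<Rightarrow> 'a \<Rightarrow> 'a poly \<Rightarrow> bool" where
  "mp_prop E x p \<longleftrightarrow> lead_coeff p = 1 \<and> poly_over E p \<and> poly p x = 0 \<and>
      (\<forall>q. q \<noteq> 0 \<and> poly_over E q \<and> poly q x = 0 \<longrightarrow> degree p \<le> degree q)"

lemma mp_prop_unique:
  assumes E: "is_subfield E" and p1: "mp_prop E x p1" and p2: "mp_prop E x p2"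
  shows "p1 = p2"
proof (rule ccontr)
  assume ne: "p1 \<noteq> p2"
  have nz1: "p1 \<noteq> 0" and nz2: "p2 \<noteq> 0" using p1 p2 unfolding mp_prop_def by auto
  have deq: "degree p1 = degree p2" using p1 p2 nz1 nz2 unfolding mp_prop_def by (meson le_antisym)
  define r where "r = p1 - p2"
  have r0: "r \<noteq> 0" using ne unfolding r_def by simp
  have rE: "poly_over E r" using p1 p2 E unfolding r_def mp_prop_def by (auto intro: poly_over_diff)
  have rx: "poly r x = 0" using p1 p2 unfolding r_def mp_prop_def by simp
  have "degree r \<le> degree p1" unfolding r_def using deq by (simp add: degree_diff_le)
  moreover have "coeff r (degree p1) = 0" unfolding r_def using p1 p2 deq unfolding mp_prop_def by simp
  ultimately have "degree r < degree p1 \<or> degree p1 = 0"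
  proof -
    assume a: "degree r \<le> degree p1" "coeff r (degree p1) = 0"
    have "degree r \<noteq> degree p1 \<or> degree p1 = 0"
    proof (rule ccontr)
      assume "\<not> ?thesis"
      hence "degree r = degree p1" by simp
      hence "lead_coeff r = 0" using a by simp
      thus False using r0 by simp
    qed
    thus ?thesis using a by linarith
  qed
  moreover have "degree p1 \<le> degree r" using p1 r0 rE rx unfolding mp_prop_def by blast
  ultimately have d0: "degree p1 = 0" by linarith
  hence "p1 = [:lead_coeff p1:]" by (metis degree_0_id)
  hence "p1 = [:1:]" using p1 unfolding mp_prop_def by simp
  hence "poly p1 x = 1" by simp
  thus False using p1 unfolding mp_prop_def by simp
qed

lemma mp_prop_exists:
  assumes E: "is_subfield E" and alg: "algebraic_over E x"
  shows "\<exists>p. mp_prop E x p"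
proof -
  define P where "P n \<longleftrightarrow> (\<exists>q. q \<noteq> 0 \<and> poly_over E q \<and> poly q x = 0 \<and> degree q = n)" for n
  have "\<exists>n. P n" using alg unfolding algebraic_over_def P_def by blast
  define n where "n = (LEAST n. P n)"
  have Pn: "P n" unfolding n_def using \<open>\<exists>n. P n\<close> by (rule LeastI_ex)
  have nmin: "\<And>m. P m \<Longrightarrow> n \<le> m" unfolding n_def by (rule Least_le)
  obtain q where q: "q \<noteq> 0" "poly_over E q" "poly q x = 0" "degree q = n" using Pn P_def by blast
  define p where "p = smult (inverse (lead_coeff q)) q"
  have "lead_coeff q \<noteq> 0" using q(1) by simp
  hence "lead_coeff p = 1" unfolding p_def by (simp add: field_simps)
  moreover have "poly_over E p" unfolding p_def using E q
    by (auto intro!: poly_over_smult sf_inverse poly_over_lead_coeff)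
  moreover have "poly p x = 0" unfolding p_def using q by simp
  moreover have "degree p = n" unfolding p_def using q \<open>lead_coeff q \<noteq> 0\<close> by (simp add: degree_smult_eq)
  moreover have "\<forall>r. r \<noteq> 0 \<and> poly_over E r \<and> poly r x = 0 \<longrightarrow> n \<le> degree r"
    using nmin unfolding P_def by blast
  ultimately show ?thesis unfolding mp_prop_def by auto
qed

lemma min_poly_prop:
  assumes E: "is_subfield E" and alg: "algebraic_over E x"
  shows "mp_prop E x (min_poly E x)"
proof -
  obtain p where p: "mp_prop E x p" using mp_prop_exists[OF E alg] by blast
  have eq: "min_poly E x = (THE p. mp_prop E x p)" unfolding min_poly_def mp_prop_def by simp
  have "(THE p. mp_prop E x p) = p"
    by (rule the_equality[where P="mp_prop E x", OF p]) (rule mp_prop_unique[OF E _ p])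
  hence "min_poly E x = p" using eq by simp
  thus ?thesis using p by simp
qed

lemma min_poly_eqI:
  assumes E: "is_subfield E" and p: "mp_prop E x p"
  shows "min_poly E x = p"
proof -
  have "p \<noteq> 0" using p unfolding mp_prop_def by auto
  hence alg: "algebraic_over E x" using p unfolding mp_prop_def algebraic_over_def by blast
  show ?thesis using mp_prop_unique[OF E min_poly_prop[OF E alg] p] .
qed

lemma min_poly:
  assumes E: "is_subfield E" and alg: "algebraic_over E x"
  shows min_poly_monic: "lead_coeff (min_poly E x) = 1"
    and min_poly_over: "poly_over E (min_poly E x)"
    and min_poly_root: "poly (min_poly E x) x = 0"
    and min_poly_min: "\<And>q. q \<noteq> 0 \<Longrightarrow> poly_over E q \<Longrightarrow> poly q x = 0 \<Longrightarrow> degree (min_poly E x) \<le> degree q"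
  using min_poly_prop[OF E alg] unfolding mp_prop_def by auto

lemma min_poly_nz:
  assumes E: "is_subfield E" and alg: "algebraic_over E x"
  shows "min_poly E x \<noteq> 0"
  using min_poly_monic[OF E alg] by auto

lemma min_poly_deg_pos:
  assumes E: "is_subfield E" and alg: "algebraic_over E x"
  shows "degree (min_poly E x) > 0"
proof (rule ccontr)
  assume "\<not> ?thesis"
  hence "min_poly E x = [:1:]" using min_poly_monic[OF E alg] by (metis degree_0_id neq0_conv)
  thus False using min_poly_root[OF E alg] by simp
qed

lemma min_poly_dvd:
  assumes E: "is_subfield E" and alg: "algebraic_over E x"
    and q: "poly_over E q" "poly q x = 0"
  shows "min_poly E x dvd q"
proof -
  let ?m = "min_poly E x"
  have mE: "poly_over E ?m" using min_poly_over[OF E alg] .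
  have rE: "poly_over E (q mod ?m)" using div_mod_over[OF E mE q(1)] by simp
  have "poly q x = poly (?m * (q div ?m)) x + poly (q mod ?m) x"
    by (metis div_mult_mod_eq mult.commute poly_add)
  hence rx: "poly (q mod ?m) x = 0" using q min_poly_root[OF E alg] by simp
  have "q mod ?m = 0"
  proof (rule ccontr)
    assume nz: "q mod ?m \<noteq> 0"
    hence "degree (q mod ?m) < degree ?m" using degree_mod_less[OF min_poly_nz[OF E alg]] by auto
    moreover have "degree ?m \<le> degree (q mod ?m)" using min_poly_min[OF E alg nz rE rx] .
    ultimately show False by simp
  qed
  thus ?thesis by (simp add: mod_eq_0_iff_dvd)
qed

lemma algebraic_mono: "algebraic_over K x \<Longrightarrow> K \<subseteq> E \<Longrightarrow> algebraic_over E x"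
  unfolding algebraic_over_def using poly_over_mono by blast

lemma min_poly_descend:
  assumes K: "is_subfield K" and E: "is_subfield E" and KE: "K \<subseteq> E"
    and alg: "algebraic_over K x"
    and over: "poly_over K (min_poly E x)"
  shows "min_poly E x = min_poly K x"
proof -
  have algE: "algebraic_over E x" using algebraic_mono[OF alg KE] .
  have "mp_prop K x (min_poly E x)"
    unfolding mp_prop_def using min_poly[OF E algE] over poly_over_mono[OF _ KE] by blast
  thus ?thesis using min_poly_eqI[OF K] by metis
qed

section \<open>Simple extensions\<close>

lemma inverse_as_poly:
  assumes E: "is_subfield E" and alg: "algebraic_over E y" and y0: "y \<noteq> 0"
  shows "\<exists>r. poly_over E r \<and> inverse y = poly r y"
proof -
  let ?m = "min_poly E y"
  obtain a m1 where m: "?m = pCons a m1" by (cases "?m") auto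
  have mE: "poly_over E ?m" using min_poly_over[OF E alg] .
  hence aE: "a \<in> E" and m1E: "poly_over E m1" using m poly_over_pCons_iff by metis+
  have root: "a + y * poly m1 y = 0" using min_poly_root[OF E alg] m by simp
  have a0: "a \<noteq> 0"
  proof
    assume a: "a = 0"
    hence "poly m1 y = 0" using root y0 by simp
    moreover have "m1 \<noteq> 0" using min_poly_nz[OF E alg] m a by auto
    ultimately have "degree ?m \<le> degree m1" using min_poly_min[OF E alg _ m1E] by blast
    moreover have "degree ?m = Suc (degree m1)" using m \<open>m1 \<noteq> 0\<close> by simp
    ultimately show False by simp
  qed
  have "y * poly m1 y = - a" using root by (simp add: eq_neg_iff_add_eq_0 add.commute)
  hence "inverse y = poly (smult (- inverse a) m1) y"
    using a0 y0 by (simp add: field_simps)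
  moreover have "poly_over E (smult (- inverse a) m1)"
    using E aE m1E by (intro poly_over_smult sf_uminus sf_inverse)
  ultimately show ?thesis by blast
qed

lemma simple_ext_char:
  assumes E: "is_subfield E" and alg: "\<forall>z. algebraic_over E z"
  shows "gen_field (insert x E) = {poly p x | p. poly_over E p}"
proof
  let ?S = "{poly p x | p. poly_over E p}"
  have inS: "poly p x \<in> ?S" if "poly_over E p" for p using that by blast
  have S0: "0 \<in> ?S" using inS[OF poly_over_0[OF E]] by simp
  have S1: "1 \<in> ?S" using inS[OF poly_over_1[OF E]] by simp
  have Sun: "- a \<in> ?S" "inverse a \<in> ?S" if "a \<in> ?S" for a
  proof -
    obtain p where p: "poly_over E p" "a = poly p x" using \<open>a \<in> ?S\<close> by blast
    show "- a \<in> ?S" using p inS[OF poly_over_uminus[OF E p(1)]] by simp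
    show "inverse a \<in> ?S"
    proof (cases "a = 0")
      case True thus ?thesis using S0 by simp
    next
      case False
      obtain r where r: "poly_over E r" "inverse a = poly r a" using inverse_as_poly[OF E _ False] alg by blast
      have "inverse a = poly (pcompose r p) x" using r p by (simp add: poly_pcompose)
      thus ?thesis using inS[OF poly_over_pcompose[OF E r(1) p(1)]] by simp
    qed
  qed
  have Sbin: "a + b \<in> ?S \<and> a * b \<in> ?S" if "a \<in> ?S" "b \<in> ?S" for a b
  proof -
    obtain p where p: "poly_over E p" "a = poly p x" using \<open>a \<in> ?S\<close> by blast
    obtain q where q: "poly_over E q" "b = poly q x" using \<open>b \<in> ?S\<close> by blast
    show ?thesis
      using p q inS[OF poly_over_add[OF E p(1) q(1)]] inS[OF poly_over_mult[OF E p(1) q(1)]]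
      by simp
  qed
  have sf: "is_subfield ?S" unfolding is_subfield_def using S0 S1 Sun Sbin by blast
  have "insert x E \<subseteq> ?S"
  proof
    fix z assume "z \<in> insert x E"
    then show "z \<in> ?S"
    proof
      assume "z = x" thus ?thesis using inS[OF poly_over_X[OF E]] by simp
    next
      assume "z \<in> E" thus ?thesis using inS[OF poly_over_const[OF E \<open>z \<in> E\<close>]] by simp
    qed
  qed
  thus "gen_field (insert x E) \<subseteq> ?S" using gen_field_min[OF sf] by blast
  show "?S \<subseteq> gen_field (insert x E)"
  proof
    fix z assume "z \<in> ?S"
    then obtain p where p: "poly_over E p" "z = poly p x" by blast
    have "E \<subseteq> gen_field (insert x E)" "x \<in> gen_field (insert x E)" using gen_field_sup by blast+
    thus "z \<in> gen_field (insert x E)" using p poly_in_sf[OF gen_field_sf poly_over_mono[OF p(1)]] by blast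
  qed
qed

lemma simple_ext_reduce:
  assumes E: "is_subfield E" and alg: "algebraic_over E x" and p: "poly_over E p"
  shows "poly_over E (p mod min_poly E x) \<and> poly (p mod min_poly E x) x = poly p x \<and>
    (p mod min_poly E x = 0 \<or> degree (p mod min_poly E x) < degree (min_poly E x))"
proof -
  let ?m = "min_poly E x"
  have "poly p x = poly (?m * (p div ?m)) x + poly (p mod ?m) x"
    by (metis div_mult_mod_eq mult.commute poly_add)
  thus ?thesis using div_mod_over[OF E min_poly_over[OF E alg] p] min_poly_root[OF E alg]
      degree_mod_less[OF min_poly_nz[OF E alg]] by auto
qed

section \<open>Splitting in an algebraically closed field\<close>

lemma alg_closedD: "alg_closed TYPE('a::field) \<Longrightarrow> degree (p::'a poly) > 0 \<Longrightarrow> \<exists>x. poly p x = 0"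
  unfolding alg_closed_def by blast

lemma monic_roots_over:
  fixes p :: "'a::field poly"
  assumes ac: "alg_closed TYPE('a)" and F: "is_subfield F"
  shows "lead_coeff p = 1 \<Longrightarrow> (\<And>r. poly p r = 0 \<Longrightarrow> r \<in> F) \<Longrightarrow> poly_over F p"
proof (induction "degree p" arbitrary: p rule: less_induct)
  case less
  show ?case
  proof (cases "degree p = 0")
    case True
    hence "p = 1" using less.prems(1) by (metis degree_0_id one_pCons)
    thus ?thesis using poly_over_1[OF F] by simp
  next
    case False
    then obtain r where r: "poly p r = 0" using alg_closedD[OF ac] by blast
    then obtain q where q: "p = [:-r, 1:] * q" using poly_eq_0_iff_dvd by blast
    have p0: "p \<noteq> 0" using less.prems(1) by auto
    hence q0: "q \<noteq> 0" using q by auto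
    have "degree ([:-r,1:] * q) = degree [:-r,1:] + degree q" by (rule degree_mult_eq) (use q0 in auto)
    hence dq: "degree p = Suc (degree q)" using q by simp
    have "lead_coeff ([:-r,1:]*q) = lead_coeff q" by (simp only: lead_coeff_mult) simp
    hence lq: "lead_coeff q = 1" using less.prems(1) q by simp
    have "poly_over F q"
      using less(1)[of q] dq lq less.prems(2) q by auto
    moreover have "r \<in> F" using less.prems(2) r .
    ultimately have "poly_over F ([:-r,1:] * q)" using F
      by (intro poly_over_mult poly_over_pCons poly_over_const sf_uminus sf1)
    thus ?thesis by (simp only: q)
  qed
qed

lemma card_roots_rsquarefree:
  fixes p :: "'a::field poly"
  assumes ac: "alg_closed TYPE('a)"
  shows "rsquarefree p \<Longrightarrow> card {x. poly p x = 0} = degree p"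
proof (induction "degree p" arbitrary: p rule: less_induct)
  case less
  have p0: "p \<noteq> 0" using less.prems unfolding rsquarefree_def by auto
  show ?case
  proof (cases "degree p = 0")
    case True
    then obtain c where "p = [:c:]" by (metis degree_0_id)
    hence "{x. poly p x = 0} = {}" using p0 by auto
    thus ?thesis using True by simp
  next
    case False
    then obtain r where r: "poly p r = 0" using alg_closedD[OF ac] by blast
    then obtain q where q: "p = [:-r, 1:] * q" using poly_eq_0_iff_dvd by blast
    have q0: "q \<noteq> 0" using q p0 by auto
    have "degree ([:-r,1:] * q) = degree [:-r,1:] + degree q" by (rule degree_mult_eq) (use q0 in auto)
    hence dq: "degree p = Suc (degree q)" using q by simp
    have ordlin: "order a [:-r,1:] = (if a = r then 1 else 0)" for a
    proof (cases "a = r")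
      case True thus ?thesis using order_power_n_n[of r 1] by simp
    next
      case False thus ?thesis by (simp add: order_0I)
    qed
    have ordp: "order a p = order a [:-r,1:] + order a q" for a using q p0 order_mult by metis
    have "order r p = 1" using rsquarefree_root_order[OF less.prems r p0] .
    hence oq: "order r q = 0" using ordp[of r] ordlin[of r] by simp
    have sq: "rsquarefree q"
      unfolding rsquarefree_def
    proof (intro conjI allI q0)
      fix a
      have "order a p = 0 \<or> order a p = 1" using less.prems unfolding rsquarefree_def by blast
      thus "order a q = 0 \<or> order a q = 1" using ordp[of a] by linarith
    qed
    have roots: "{x. poly p x = 0} = insert r {x. poly q x = 0}" using q by auto
    have "poly q r \<noteq> 0"
    proof
      assume "poly q r = 0"
      hence "order r q \<noteq> 0" using q0 order_root by blast
      thus False using oq by simp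
    qed
    hence rq: "r \<notin> {x. poly q x = 0}" by simp
    have "card {x. poly p x = 0} = Suc (card {x. poly q x = 0})"
      unfolding roots using rq poly_roots_finite[OF q0] by simp
    also have "\<dots> = Suc (degree q)" using less(1)[of q] dq sq by simp
    finally show ?thesis using dq by simp
  qed
qed


section \<open>Homomorphisms on subfields\<close>

definition hom_on :: "'a::field set \<Rightarrow> ('a \<Rightarrow> 'a) \<Rightarrow> bool" where
  "hom_on E \<tau> \<longleftrightarrow> \<tau> 1 = 1 \<and> (\<forall>a\<in>E. \<forall>b\<in>E. \<tau> (a + b) = \<tau> a + \<tau> b \<and> \<tau> (a * b) = \<tau> a * \<tau> b)"

context
  fixes E :: "'a::field set" and \<tau> :: "'a \<Rightarrow> 'a"
  assumes E: "is_subfield E" and h: "hom_on E \<tau>"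
begin

lemma hom_1: "\<tau> 1 = 1" using h unfolding hom_on_def by auto

lemma hom_add: "a \<in> E \<Longrightarrow> b \<in> E \<Longrightarrow> \<tau> (a + b) = \<tau> a + \<tau> b"
  using h unfolding hom_on_def by auto

lemma hom_mult: "a \<in> E \<Longrightarrow> b \<in> E \<Longrightarrow> \<tau> (a * b) = \<tau> a * \<tau> b"
  using h unfolding hom_on_def by auto

lemma hom_0: "\<tau> 0 = 0"
proof -
  have "\<tau> (0 + 0) = \<tau> 0 + \<tau> 0" using hom_add[OF sf0[OF E] sf0[OF E]] .
  hence "\<tau> 0 = \<tau> 0 + \<tau> 0" by simp
  thus ?thesis by (metis add_cancel_right_right)
qed

lemma hom_uminus: "a \<in> E \<Longrightarrow> \<tau> (- a) = - \<tau> a"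
proof -
  assume a: "a \<in> E"
  have "\<tau> (a + - a) = \<tau> a + \<tau> (- a)" using hom_add[OF a sf_uminus[OF E a]] .
  hence "\<tau> a + \<tau> (- a) = 0" using hom_0 by simp
  thus ?thesis by (metis add_eq_0_iff)
qed

lemma hom_diff: "a \<in> E \<Longrightarrow> b \<in> E \<Longrightarrow> \<tau> (a - b) = \<tau> a - \<tau> b"
  using hom_add[of a "- b"] hom_uminus[of b] sf_uminus[OF E, of b] by simp

lemma hom_sum: "(\<And>i. i \<in> A \<Longrightarrow> f i \<in> E) \<Longrightarrow> \<tau> (sum f A) = (\<Sum>i\<in>A. \<tau> (f i))"
proof (induction A rule: infinite_finite_induct)
  case (insert x F)
  then show ?case by (simp add: hom_add sf_sum[OF E])
qed (simp_all add: hom_0)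

lemma hom_power: "a \<in> E \<Longrightarrow> \<tau> (a ^ n) = \<tau> a ^ n"
  by (induction n) (simp_all add: hom_1 hom_mult sf_power[OF E])

lemma hom_inj0: "a \<in> E \<Longrightarrow> \<tau> a = 0 \<Longrightarrow> a = 0"
proof (rule ccontr)
  assume a: "a \<in> E" "\<tau> a = 0" "a \<noteq> 0"
  have "\<tau> (a * inverse a) = \<tau> a * \<tau> (inverse a)" using a sf_inverse[OF E] hom_mult by blast
  thus False using a hom_1 by simp
qed

lemma coeff_map_hom: "coeff (map_poly \<tau> p) n = \<tau> (coeff p n)"
  by (simp add: coeff_map_poly hom_0)

lemma map_hom_add: "poly_over E p \<Longrightarrow> poly_over E q \<Longrightarrow> map_poly \<tau> (p + q) = map_poly \<tau> p + map_poly \<tau> q"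
  by (rule poly_eqI) (simp add: coeff_map_hom hom_add poly_overD)

lemma map_hom_diff: "poly_over E p \<Longrightarrow> poly_over E q \<Longrightarrow> map_poly \<tau> (p - q) = map_poly \<tau> p - map_poly \<tau> q"
  by (rule poly_eqI) (simp add: coeff_map_hom hom_diff poly_overD)

lemma map_hom_mult: "poly_over E p \<Longrightarrow> poly_over E q \<Longrightarrow> map_poly \<tau> (p * q) = map_poly \<tau> p * map_poly \<tau> q"
proof (rule poly_eqI)
  fix n assume p: "poly_over E p" and q: "poly_over E q"
  have "coeff (map_poly \<tau> (p * q)) n = \<tau> (\<Sum>i\<le>n. coeff p i * coeff q (n - i))"
    by (simp add: coeff_map_hom coeff_mult)
  also have "\<dots> = (\<Sum>i\<le>n. \<tau> (coeff p i) * \<tau> (coeff q (n - i)))"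
    using p q by (simp add: hom_sum hom_mult poly_overD sf_mult[OF E])
  also have "\<dots> = coeff (map_poly \<tau> p * map_poly \<tau> q) n"
    by (simp add: coeff_map_hom coeff_mult)
  finally show "coeff (map_poly \<tau> (p * q)) n = coeff (map_poly \<tau> p * map_poly \<tau> q) n" .
qed

lemma map_hom_pCons: "map_poly \<tau> (pCons a p) = pCons (\<tau> a) (map_poly \<tau> p)"
  by (rule map_poly_pCons) (rule hom_0)

lemma poly_hom: "poly_over E p \<Longrightarrow> z \<in> E \<Longrightarrow> \<tau> (poly p z) = poly (map_poly \<tau> p) (\<tau> z)"
proof (induction p)
  case 0 then show ?case by (simp add: hom_0)
next
  case (pCons a p)
  have aE: "a \<in> E" and pE: "poly_over E p" using pCons.prems(1) poly_over_pCons_iff by metis+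
  have "\<tau> (poly (pCons a p) z) = \<tau> (a + z * poly p z)" by simp
  also have "\<dots> = \<tau> a + \<tau> z * \<tau> (poly p z)"
    using aE pE pCons.prems(2) by (simp add: hom_add hom_mult sf_mult[OF E] poly_in_sf[OF E])
  also have "\<dots> = poly (map_poly \<tau> (pCons a p)) (\<tau> z)"
    using pCons.IH[OF pE pCons.prems(2)] by (simp add: map_hom_pCons)
  finally show ?case .
qed

lemma degree_map_hom: "poly_over E p \<Longrightarrow> degree (map_poly \<tau> p) = degree p"
proof (cases "p = 0")
  case False
  assume pE: "poly_over E p"
  have "degree (map_poly \<tau> p) \<le> degree p"
    by (rule degree_le) (simp add: coeff_map_hom coeff_eq_0 hom_0)
  moreover have "coeff (map_poly \<tau> p) (degree p) \<noteq> 0"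
    using False hom_inj0[OF poly_overD[OF pE]] by (simp add: coeff_map_hom) (metis leading_coeff_0_iff)
  hence "degree p \<le> degree (map_poly \<tau> p)" by (rule le_degree)
  ultimately show ?thesis by simp
qed simp

lemma map_hom_fix: "K \<subseteq> E \<Longrightarrow> (\<forall>a\<in>K. \<tau> a = a) \<Longrightarrow> poly_over K p \<Longrightarrow> map_poly \<tau> p = p"
  by (rule poly_eqI) (simp add: coeff_map_hom poly_overD)

lemma poly_hom_fix:
  "K \<subseteq> E \<Longrightarrow> (\<forall>a\<in>K. \<tau> a = a) \<Longrightarrow> poly_over K p \<Longrightarrow> z \<in> E \<Longrightarrow> \<tau> (poly p z) = poly p (\<tau> z)"
  using poly_hom[OF poly_over_mono] map_hom_fix by metis

end

section \<open>Extension of homomorphisms along a simple extension\<close>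

lemma ext_hom:
  assumes E: "is_subfield E" and alg: "\<forall>z. algebraic_over E z" and h: "hom_on E \<tau>"
    and y: "poly (map_poly \<tau> (min_poly E x)) y = 0"
  shows "\<exists>\<sigma>. hom_on (gen_field (insert x E)) \<sigma> \<and> (\<forall>a\<in>E. \<sigma> a = \<tau> a) \<and> \<sigma> x = y \<and>
           (\<forall>p. poly_over E p \<longrightarrow> \<sigma> (poly p x) = poly (map_poly \<tau> p) y)"
proof -
  let ?m = "min_poly E x"
  have algx: "algebraic_over E x" using alg by blast
  have mE: "poly_over E ?m" using min_poly_over[OF E algx] .
  have wd: "poly (map_poly \<tau> p1) y = poly (map_poly \<tau> p2) y"
    if p1: "poly_over E p1" and p2: "poly_over E p2" and eq: "poly p1 x = poly p2 x" for p1 p2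
  proof -
    have dE: "poly_over E (p1 - p2)" using poly_over_diff[OF E p1 p2] .
    have "?m dvd (p1 - p2)" using min_poly_dvd[OF E algx dE] eq by simp
    hence d: "p1 - p2 = ?m * ((p1 - p2) div ?m)" by simp
    have kE: "poly_over E ((p1 - p2) div ?m)" using div_mod_over[OF E mE dE] by simp
    have "map_poly \<tau> p1 - map_poly \<tau> p2 = map_poly \<tau> (p1 - p2)" using map_hom_diff[OF E h p1 p2] by simp
    also have "\<dots> = map_poly \<tau> ?m * map_poly \<tau> ((p1 - p2) div ?m)"
      by (subst d) (rule map_hom_mult[OF E h mE kE])
    finally have "poly (map_poly \<tau> p1) y - poly (map_poly \<tau> p2) y = 0"
      using y by (metis mult_zero_left poly_diff poly_mult)
    thus ?thesis by simp
  qed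
  define rep where "rep z = (SOME p. poly_over E p \<and> poly p x = z)" for z
  define \<sigma> where "\<sigma> z = poly (map_poly \<tau> (rep z)) y" for z
  have S: "gen_field (insert x E) = {poly p x | p. poly_over E p}" using simple_ext_char[OF E alg] .
  have form: "\<sigma> (poly p x) = poly (map_poly \<tau> p) y" if p: "poly_over E p" for p
  proof -
    have "\<exists>q. poly_over E q \<and> poly q x = poly p x" using p by blast
    hence r: "poly_over E (rep (poly p x)) \<and> poly (rep (poly p x)) x = poly p x"
      unfolding rep_def by (rule someI_ex)
    show ?thesis unfolding \<sigma>_def using wd[OF _ p] r by blast
  qed
  have hom: "hom_on (gen_field (insert x E)) \<sigma>"
    unfolding hom_on_def
  proof (intro conjI ballI)
    show "\<sigma> 1 = 1" using form[OF poly_over_1[OF E]] hom_1[OF E h] by (simp add: map_poly_1)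
    fix a b assume "a \<in> gen_field (insert x E)" "b \<in> gen_field (insert x E)"
    then obtain p q where p: "poly_over E p" "a = poly p x" and q: "poly_over E q" "b = poly q x"
      unfolding S by blast
    have "\<sigma> (a + b) = \<sigma> (poly (p + q) x)" using p q by simp
    also have "\<dots> = poly (map_poly \<tau> (p + q)) y" using form poly_over_add[OF E p(1) q(1)] by blast
    also have "\<dots> = \<sigma> a + \<sigma> b" using p q form map_hom_add[OF E h p(1) q(1)] by simp
    finally show "\<sigma> (a + b) = \<sigma> a + \<sigma> b" .
    have "\<sigma> (a * b) = \<sigma> (poly (p * q) x)" using p q by simp
    also have "\<dots> = poly (map_poly \<tau> (p * q)) y" using form poly_over_mult[OF E p(1) q(1)] by blast
    also have "\<dots> = \<sigma> a * \<sigma> b" using p q form map_hom_mult[OF E h p(1) q(1)] by simp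
    finally show "\<sigma> (a * b) = \<sigma> a * \<sigma> b" .
  qed
  have onE: "\<forall>a\<in>E. \<sigma> a = \<tau> a"
  proof
    fix a assume a: "a \<in> E"
    have "\<sigma> (poly [:a:] x) = poly (map_poly \<tau> [:a:]) y" using form poly_over_const[OF E a] by blast
    thus "\<sigma> a = \<tau> a" using hom_0[OF E h] by (simp add: map_poly_pCons)
  qed
  have onx: "\<sigma> x = y"
  proof -
    have "\<sigma> (poly [:0, 1:] x) = poly (map_poly \<tau> [:0, 1:]) y" using form poly_over_X[OF E] by blast
    thus ?thesis using hom_0[OF E h] hom_1[OF E h] by (simp add: map_poly_pCons)
  qed
  show ?thesis using hom onE onx form by blast
qed


section \<open>Separability over perfect fields\<close>

lemma char0_of_nat:
  assumes c: "\<forall>p::nat. prime p \<longrightarrow> of_nat p \<noteq> (0::'a::field)"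
  shows "n > 0 \<Longrightarrow> of_nat n \<noteq> (0::'a)"
proof (induction n rule: less_induct)
  case (less n)
  show ?case
  proof (cases "n = 1")
    case False
    then obtain p where p: "prime p" "p dvd n" using prime_factor_nat by blast
    then obtain m where m: "n = p * m" by blast
    have "m > 0" using less.prems m by auto
    moreover have "m < n" using m prime_gt_1_nat[OF p(1)] less.prems by auto
    ultimately have "of_nat m \<noteq> (0::'a)" using less.IH by blast
    thus ?thesis using c p m by simp
  qed simp
qed

lemma charp_of_nat:
  assumes p: "prime p" and c: "of_nat p = (0::'a::field)" and nd: "\<not> p dvd i"
  shows "of_nat i \<noteq> (0::'a)"
proof
  assume i0: "of_nat i = (0::'a)"
  have "i \<noteq> 0" proof assume "i = 0" thus False using nd by simp qed
  then obtain x y where xy: "i * x = p * y + gcd i p" using bezout_nat by blast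
  have "coprime p i" using prime_imp_coprime[OF p nd] .
  hence "gcd i p = 1" by (simp add: coprime_iff_gcd_eq_1 gcd.commute)
  hence "i * x = p * y + 1" using xy by simp
  hence "(of_nat (i * x) :: 'a) = of_nat (p * y + 1)" by simp
  thus False using i0 c by simp
qed

lemma frob_add:
  assumes p: "prime p" and c: "of_nat p = (0::'a::field)"
  shows "(a + b) ^ p = a ^ p + (b::'a) ^ p"
proof -
  have p0: "p \<noteq> 0" using p by auto
  have "(a + b) ^ p = (\<Sum>k\<le>p. of_nat (p choose k) * a ^ k * b ^ (p - k))" by (rule binomial_ring)
  also have "\<dots> = (\<Sum>k\<in>{0, p}. of_nat (p choose k) * a ^ k * b ^ (p - k))"
  proof (rule sum.mono_neutral_right)
    show "\<forall>k\<in>{..p} - {0, p}. of_nat (p choose k) * a ^ k * b ^ (p - k) = 0"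
    proof
      fix k assume k: "k \<in> {..p} - {0, p}"
      hence "p dvd (p choose k)" using dvd_choose_prime[of k p] p by auto
      then obtain m where "p choose k = p * m" by blast
      thus "of_nat (p choose k) * a ^ k * b ^ (p - k) = 0" using c by simp
    qed
  qed auto
  also have "\<dots> = a ^ p + b ^ p" using p0 by simp
  finally show ?thesis .
qed

lemma frob_sum:
  assumes p: "prime p" and c: "of_nat p = (0::'a::field)"
  shows "(\<Sum>i\<in>A. f i) ^ p = (\<Sum>i\<in>A. (f i :: 'a) ^ p)"
proof (induction A rule: infinite_finite_induct)
  case (insert x F) thus ?case by (simp add: frob_add[OF p c])
next
  case empty thus ?case using p by (simp add: zero_power prime_gt_0_nat)
next
  case (infinite A) thus ?case using p by (simp add: zero_power prime_gt_0_nat)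
qed

lemma pderiv_root_of_double:
  fixes f :: "'a::field poly"
  assumes "f \<noteq> 0" "order r f \<ge> 2"
  shows "poly f r = 0" "poly (pderiv f) r = 0"
proof -
  have "[:-r,1:] ^ 2 dvd f" using order_1[of r f] assms(2) power_le_dvd by blast
  then obtain q where q: "f = [:-r,1:] ^ 2 * q" by blast
  show "poly f r = 0" using q by simp
  have "pderiv f = [:-r,1:] ^ 2 * pderiv q + q * (smult (of_nat 2) [:-r,1:] * pderiv [:-r,1:])"
    unfolding q pderiv_mult using pderiv_power_Suc[of "[:-r,1:]" 1] by (simp add: numeral_2_eq_2)
  thus "poly (pderiv f) r = 0" by simp
qed

lemma min_poly_conj:
  assumes K: "is_subfield K" and alg: "algebraic_over K x" and r: "poly (min_poly K x) r = 0"
  shows "min_poly K r = min_poly K x"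
proof -
  let ?f = "min_poly K x"
  have fK: "poly_over K ?f" using min_poly_over[OF K alg] .
  have algr: "algebraic_over K r" unfolding algebraic_over_def using min_poly_nz[OF K alg] fK r by blast
  let ?m = "min_poly K r"
  have "?m dvd ?f" using min_poly_dvd[OF K algr fK r] .
  then obtain s where s: "?f = ?m * s" by blast
  have mK: "poly_over K ?m" using min_poly_over[OF K algr] .
  have sK: "s = ?f div ?m" using s min_poly_nz[OF K algr] by simp
  hence sK: "poly_over K s" using div_mod_over[OF K mK fK] by simp
  have f0: "?f \<noteq> 0" using min_poly_nz[OF K alg] .
  have m0: "?m \<noteq> 0" and s0: "s \<noteq> 0" using s f0 by auto
  have dsum: "degree ?f = degree ?m + degree s" using s m0 s0 by (simp add: degree_mult_eq)
  have "poly ?m x * poly s x = 0" using min_poly_root[OF K alg] s by (metis poly_mult)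
  hence "poly ?m x = 0 \<or> poly s x = 0" by simp
  thus ?thesis
  proof
    assume "poly ?m x = 0"
    hence "degree ?f \<le> degree ?m" using min_poly_min[OF K alg m0 mK] by blast
    hence "degree s = 0" using dsum by simp
    then obtain c where c: "s = [:c:]" by (metis degree_0_id)
    have "lead_coeff ?f = lead_coeff ?m * lead_coeff s" using s by (simp add: lead_coeff_mult)
    hence "c = 1" using c min_poly_monic[OF K alg] min_poly_monic[OF K algr] by simp
    thus ?thesis using s c by simp
  next
    assume "poly s x = 0"
    hence "degree ?f \<le> degree s" using min_poly_min[OF K alg s0 sK] by blast
    hence "degree ?m = 0" using dsum by simp
    thus ?thesis using min_poly_deg_pos[OF K algr] by simp
  qed
qed

lemma poly_over_pderiv: "is_subfield K \<Longrightarrow> poly_over K p \<Longrightarrow> poly_over K (pderiv p)"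
  unfolding poly_over_def coeff_pderiv by (metis sf_mult sf_of_nat)

lemma degree_pderiv_less: "degree p > 0 \<Longrightarrow> degree (pderiv (p :: 'a::field poly)) < degree p"
proof -
  assume d: "degree p > 0"
  have "degree (pderiv p) \<le> degree p - 1"
    by (rule degree_le) (auto simp: coeff_pderiv coeff_eq_0)
  thus ?thesis using d by linarith
qed

lemma perfect_separable:
  assumes K: "is_subfield K" and pf: "perfect_field K" and alg: "algebraic_over K x"
  shows "rsquarefree (min_poly K x)"
proof (rule ccontr)
  let ?f = "min_poly K x"
  assume nsq: "\<not> rsquarefree ?f"
  have f0: "?f \<noteq> 0" using min_poly_nz[OF K alg] .
  obtain r where "order r ?f \<noteq> 0" "order r ?f \<noteq> 1" using nsq f0 unfolding rsquarefree_def by blast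
  hence o2: "order r ?f \<ge> 2" by linarith
  have fr: "poly ?f r = 0" and dr: "poly (pderiv ?f) r = 0" using pderiv_root_of_double[OF f0 o2] by auto
  have mr: "min_poly K r = ?f" using min_poly_conj[OF K alg fr] .
  have algr: "algebraic_over K r" unfolding algebraic_over_def using f0 min_poly_over[OF K alg] fr by blast
  have fK: "poly_over K ?f" using min_poly_over[OF K alg] .
  have dpos: "degree ?f > 0" using min_poly_deg_pos[OF K alg] .
  have pd0: "pderiv ?f = 0"
  proof (rule ccontr)
    assume "pderiv ?f \<noteq> 0"
    hence "degree (min_poly K r) \<le> degree (pderiv ?f)"
      using min_poly_min[OF K algr _ poly_over_pderiv[OF K fK] dr] by blast
    thus False using mr degree_pderiv_less[OF dpos] by simp
  qed
  have cz: "of_nat (Suc n) * coeff ?f (Suc n) = 0" for n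
    using pd0 coeff_pderiv[of ?f n] by simp
  show False
  proof (cases "\<forall>p::nat. prime p \<longrightarrow> of_nat p \<noteq> (0::'a)")
    case True
    have "coeff ?f (Suc n) = 0" for n using cz[of n] char0_of_nat[OF True, of "Suc n"] by simp
    hence "coeff ?f (degree ?f) = 0" using dpos by (metis Suc_pred)
    thus False using f0 by simp
  next
    case False
    then obtain p :: nat where p: "prime p" and c: "of_nat p = (0::'a)" by blast
    have p1: "p > 1" using prime_gt_1_nat[OF p] .
    have perf: "\<forall>z\<in>K. \<exists>y\<in>K. y ^ p = z" using pf p c unfolding perfect_field_def by blast
    have cnd: "coeff ?f i = 0" if "\<not> p dvd i" for i
    proof -
      have "i \<noteq> 0" proof assume "i = 0" thus False using that by simp qed
      then obtain n where n: "i = Suc n" by (metis not0_implies_Suc)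
      thus ?thesis using cz[of n] charp_of_nat[OF p c that] by simp
    qed
    define N where "N = degree ?f div p"
    have pdeg: "p dvd degree ?f" using cnd f0 by (metis leading_coeff_0_iff)
    hence NN: "p * N = degree ?f" unfolding N_def by simp
    have Nlt: "N < degree ?f" using NN p1 dpos by (metis less_le_trans mult_le_cancel2 nat_mult_less_cancel1 not_le
          mult.commute mult_1 neq0_conv less_imp_le_nat)
    define b where "b j = (SOME y. y \<in> K \<and> y ^ p = coeff ?f (p * j))" for j
    have b: "b j \<in> K \<and> b j ^ p = coeff ?f (p * j)" for j
    proof -
      have "\<exists>y. y \<in> K \<and> y ^ p = coeff ?f (p * j)" using perf poly_overD[OF fK] by blast
      thus ?thesis unfolding b_def by (rule someI_ex)
    qed
    define g where "g = (\<Sum>j\<le>N. Polynomial.monom (b j) j)"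
    have gK: "poly_over K g" unfolding g_def using K b by (auto intro!: poly_over_sum poly_over_monom)
    have cg: "coeff g N = b N" unfolding g_def by (simp add: coeff_sum)
    have bN: "b N \<noteq> 0"
    proof
      assume "b N = 0"
      hence "coeff ?f (p * N) = 0" using b[of N] p1 by (simp add: zero_power)
      thus False using NN f0 by simp
    qed
    have g0: "g \<noteq> 0" using cg bN by auto
    have dg: "degree g \<le> N" unfolding g_def
      by (rule degree_sum_le) (auto intro: order_trans[OF degree_monom_le])
    have "poly g x ^ p = (\<Sum>j\<le>N. b j * x ^ j) ^ p" unfolding g_def by (simp add: poly_sum poly_monom)
    also have "\<dots> = (\<Sum>j\<le>N. (b j * x ^ j) ^ p)" by (rule frob_sum[OF p c])
    also have "\<dots> = (\<Sum>j\<le>N. coeff ?f (p * j) * x ^ (p * j))"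
      using b by (simp add: power_mult_distrib power_mult[symmetric] mult.commute)
    also have "\<dots> = (\<Sum>i\<in>(\<lambda>j. p * j) ` {..N}. coeff ?f i * x ^ i)"
      using p1 by (subst sum.reindex) (auto simp: inj_on_def)
    also have "\<dots> = (\<Sum>i\<le>degree ?f. coeff ?f i * x ^ i)"
    proof (rule sum.mono_neutral_left)
      show "(\<lambda>j. p * j) ` {..N} \<subseteq> {..degree ?f}" using NN by (auto simp flip: NN)
      show "\<forall>i\<in>{..degree ?f} - (\<lambda>j. p * j) ` {..N}. coeff ?f i * x ^ i = 0"
      proof
        fix i assume i: "i \<in> {..degree ?f} - (\<lambda>j. p * j) ` {..N}"
        have "\<not> p dvd i"
        proof
          assume "p dvd i"
          then obtain j where j: "i = p * j" by blast
          have "p * j \<le> p * N" using i j NN by auto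
          hence "j \<le> N" using p1 by simp
          thus False using i j by auto
        qed
        thus "coeff ?f i * x ^ i = 0" using cnd by simp
      qed
    qed auto
    also have "\<dots> = poly ?f x" by (simp add: poly_altdef)
    also have "\<dots> = 0" using min_poly_root[OF K alg] .
    finally have "poly g x = 0" using p1 by simp
    hence "degree ?f \<le> degree g" using min_poly_min[OF K alg g0 gK] by blast
    thus False using dg Nlt by simp
  qed
qed


section \<open>Finite subfields have cyclic multiplicative groups\<close>

definition sf_ring :: "'a::field set \<Rightarrow> 'a ring" where
  "sf_ring E = \<lparr>carrier = E, monoid.mult = (\<lambda>x y. x * y), one = 1, ring.zero = 0, add = (\<lambda>x y. x + y)\<rparr>"

lemma sf_ring_field:
  assumes E: "is_subfield (E :: 'a::field set)"
  shows "field (sf_ring E)"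
proof -
  have inv: "\<exists>y\<in>E. x * y = 1" if "x \<in> E" "x \<noteq> 0" for x
    using that sf_inverse[OF E] by (intro bexI[of _ "inverse x"]) auto
  have neg: "\<exists>y\<in>E. x + y = 0" if "x \<in> E" for x
    using that sf_uminus[OF E] by (intro bexI[of _ "- x"]) auto
  show ?thesis
    unfolding sf_ring_def
    apply unfold_locales
    using sfD[OF E] inv neg
    by (auto simp: algebra_simps Units_def)
qed

lemma nat_pow_sf_ring: "x [^]\<^bsub>sf_ring E\<^esub> (n::nat) = x ^ n"
  by (induction n) (simp_all add: sf_ring_def)

lemma finite_sf_cyclic:
  assumes E: "is_subfield (E :: 'a::field set)" and fin: "finite E"
  shows "\<exists>a\<in>E. \<forall>z\<in>E. z \<noteq> 0 \<longrightarrow> (\<exists>i::nat. z = a ^ i)"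
proof -
  interpret field "sf_ring E" by (rule sf_ring_field[OF E])
  have "finite (carrier (sf_ring E))" using fin by (simp add: sf_ring_def)
  then obtain a where a: "a \<in> carrier (mult_of (sf_ring E))"
    and gen: "carrier (mult_of (sf_ring E)) = {a [^]\<^bsub>sf_ring E\<^esub> i | i::nat. i \<in> UNIV}"
    using finite_field_mult_group_has_gen by blast
  have "a \<in> E" using a by (simp add: sf_ring_def)
  moreover have "\<forall>z\<in>E. z \<noteq> 0 \<longrightarrow> (\<exists>i::nat. z = a ^ i)"
  proof (intro ballI impI)
    fix z assume "z \<in> E" "z \<noteq> 0"
    hence "z \<in> carrier (mult_of (sf_ring E))" by (simp add: sf_ring_def)
    thus "\<exists>i::nat. z = a ^ i" unfolding gen by (auto simp: nat_pow_sf_ring)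
  qed
  ultimately show ?thesis by blast
qed


section \<open>Primitive elements\<close>

lemma finite_polys_bounded:
  assumes fin: "finite E"
  shows "finite {p. poly_over E p \<and> degree p \<le> n}"
proof -
  let ?f = "\<lambda>p. map (coeff p) [0..<Suc n]"
  have inj: "inj_on ?f {p. poly_over E p \<and> degree p \<le> n}"
  proof (rule inj_onI)
    fix p q assume p: "p \<in> {p. poly_over E p \<and> degree p \<le> n}" and q: "q \<in> {p. poly_over E p \<and> degree p \<le> n}"
      and eq: "?f p = ?f q"
    show "p = q"
    proof (rule poly_eqI)
      fix i
      show "coeff p i = coeff q i"
      proof (cases "i \<le> n")
        case True
        have "\<forall>j\<in>set [0..<Suc n]. coeff p j = coeff q j" using eq by (simp only: map_eq_conv)
        moreover have "i \<in> set [0..<Suc n]" using True by (simp del: upt_Suc)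
        ultimately show ?thesis by blast
      next
        case False
        thus ?thesis using p q by (simp add: coeff_eq_0)
      qed
    qed
  qed
  have "?f ` {p. poly_over E p \<and> degree p \<le> n} \<subseteq> {xs. set xs \<subseteq> E \<and> length xs = Suc n}"
    by (auto simp: poly_overD simp del: upt_Suc)
  moreover have "finite {xs. set xs \<subseteq> E \<and> length xs = Suc n}" using finite_lists_length_eq[OF fin] .
  ultimately show ?thesis using inj_on_finite[OF inj] by blast
qed

lemma simple_ext_finite:
  assumes E: "is_subfield E" and fin: "finite E" and alg: "\<forall>z. algebraic_over E z"
  shows "finite (gen_field (insert x E))"
proof -
  let ?m = "min_poly E x"
  have algx: "algebraic_over E x" using alg by blast
  have "gen_field (insert x E) \<subseteq> (\<lambda>p. poly p x) ` {p. poly_over E p \<and> degree p \<le> degree ?m}"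
  proof
    fix z assume "z \<in> gen_field (insert x E)"
    then obtain p where p: "poly_over E p" "z = poly p x" unfolding simple_ext_char[OF E alg] by blast
    have r: "poly_over E (p mod ?m) \<and> poly (p mod ?m) x = poly p x \<and>
      (p mod ?m = 0 \<or> degree (p mod ?m) < degree ?m)" using simple_ext_reduce[OF E algx p(1)] .
    hence "degree (p mod ?m) \<le> degree ?m" by auto
    thus "z \<in> (\<lambda>p. poly p x) ` {p. poly_over E p \<and> degree p \<le> degree ?m}"
      using r p by (intro image_eqI[of _ _ "p mod ?m"]) auto
  qed
  thus ?thesis using finite_polys_bounded[OF fin] finite_surj by blast
qed

lemma alg_all_mono: "\<forall>z. algebraic_over K z \<Longrightarrow> K \<subseteq> E \<Longrightarrow> \<forall>z. algebraic_over E z"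
  using algebraic_mono by blast

lemma gen_field_sf_super:
  "is_subfield K \<Longrightarrow> K \<subseteq> gen_field (insert x K)" "x \<in> gen_field (insert x K)"
  using gen_field_sup by blast+

lemma prim2_finite:
  assumes K: "is_subfield K" and fin: "finite K" and alg: "\<forall>z. algebraic_over K z"
  shows "\<exists>\<theta>. gen_field (insert \<beta> (insert \<gamma> K)) = gen_field (insert \<theta> K)"
proof -
  let ?E1 = "gen_field (insert \<beta> K)"
  have E1: "is_subfield ?E1" by (rule gen_field_sf)
  have f1: "finite ?E1" using simple_ext_finite[OF K fin alg] .
  have KE1: "K \<subseteq> ?E1" using gen_field_sup by blast
  have eq: "gen_field (insert \<beta> (insert \<gamma> K)) = gen_field (insert \<gamma> ?E1)"
    using gen_field_insert_gen[of \<gamma> "insert \<beta> K"] by (simp add: insert_commute)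
  let ?E = "gen_field (insert \<beta> (insert \<gamma> K))"
  have fE: "finite ?E" unfolding eq using simple_ext_finite[OF E1 f1 alg_all_mono[OF alg KE1]] .
  have E: "is_subfield ?E" by (rule gen_field_sf)
  obtain a where a: "a \<in> ?E" and gen: "\<forall>z\<in>?E. z \<noteq> 0 \<longrightarrow> (\<exists>i::nat. z = a ^ i)"
    using finite_sf_cyclic[OF E fE] by blast
  have "?E = gen_field (insert a K)"
  proof
    show "gen_field (insert a K) \<subseteq> ?E" using a gen_field_sup[of "insert \<beta> (insert \<gamma> K)"]
      by (intro gen_field_min[OF E]) auto
    show "?E \<subseteq> gen_field (insert a K)"
    proof
      fix z assume z: "z \<in> ?E"
      show "z \<in> gen_field (insert a K)"
      proof (cases "z = 0")
        case True thus ?thesis using sf0[OF gen_field_sf] by simp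
      next
        case False
        then obtain i where "z = a ^ i" using gen z by blast
        thus ?thesis using sf_power[OF gen_field_sf] gen_field_sup[of "insert a K"] by blast
      qed
    qed
  qed
  thus ?thesis by blast
qed

lemma order_ge2_of_two_roots:
  fixes m :: "'a::field poly"
  assumes "m = [:-g, 1:] * s" "m \<noteq> 0" "poly s g = 0"
  shows "order g m \<ge> 2"
proof -
  have s0: "s \<noteq> 0" using assms by auto
  have "order g m = order g [:-g,1:] + order g s" using assms order_mult by metis
  moreover have "order g [:-g,1:] = 1" using order_power_n_n[of g 1] by simp
  moreover have "order g s \<ge> 1" using assms(3) s0 order_root by (metis less_one not_le)
  ultimately show ?thesis by simp
qed

lemma prim2_infinite:
  assumes K: "is_subfield K" and inf: "infinite K" and alg: "\<forall>z. algebraic_over K z"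
    and ac: "alg_closed TYPE('a::field)"
    and sep: "rsquarefree (min_poly K (\<gamma>::'a))"
  shows "\<exists>\<theta>. gen_field (insert \<beta> (insert \<gamma> K)) = gen_field (insert \<theta> K)"
proof -
  let ?fb = "min_poly K \<beta>" and ?fg = "min_poly K \<gamma>"
  have algb: "algebraic_over K \<beta>" and algg: "algebraic_over K \<gamma>" using alg by auto
  define Rb where "Rb = {r. poly ?fb r = 0}"
  define Rg where "Rg = {r. poly ?fg r = 0}"
  have fRb: "finite Rb" unfolding Rb_def using poly_roots_finite[OF min_poly_nz[OF K algb]] .
  have fRg: "finite Rg" unfolding Rg_def using poly_roots_finite[OF min_poly_nz[OF K algg]] .
  define C where "C = (\<lambda>(b', g'). (b' - \<beta>) / (\<gamma> - g')) ` (Rb \<times> (Rg - {\<gamma>}))"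
  have fC: "finite C" unfolding C_def using fRb fRg by auto
  have "infinite (K - C)" using inf fC by (rule Diff_infinite_finite[rotated])
  then obtain c where c: "c \<in> K" "c \<notin> C" by (metis Diff_iff finite.emptyI ex_in_conv)
  define \<theta> where "\<theta> = \<beta> + c * \<gamma>"
  let ?E = "gen_field (insert \<theta> K)"
  have E: "is_subfield ?E" by (rule gen_field_sf)
  have KE: "K \<subseteq> ?E" and thE: "\<theta> \<in> ?E" using gen_field_sup by blast+
  have algE: "\<forall>z. algebraic_over ?E z" using alg_all_mono[OF alg KE] .
  have cE: "c \<in> ?E" using KE c by blast
  define k where "k = pcompose ?fb [:\<theta>, -c:]"
  have kE: "poly_over ?E k" unfolding k_def using E KE thE cE
    by (intro poly_over_pcompose poly_over_mono[OF min_poly_over[OF K algb] KE] poly_over_pCons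
        poly_over_const sf_uminus) auto
  have kg: "poly k \<gamma> = 0" unfolding k_def \<theta>_def by (simp add: poly_pcompose min_poly_root[OF K algb])
  have fgE: "poly_over ?E ?fg" using poly_over_mono[OF min_poly_over[OF K algg] KE] .
  let ?m = "min_poly ?E \<gamma>"
  have algEg: "algebraic_over ?E \<gamma>" using algE by blast
  have mk: "?m dvd k" using min_poly_dvd[OF E algEg kE kg] .
  have mf: "?m dvd ?fg" using min_poly_dvd[OF E algEg fgE min_poly_root[OF K algg]] .
  have only: "r = \<gamma>" if r: "poly ?m r = 0" for r
  proof (rule ccontr)
    assume ne: "r \<noteq> \<gamma>"
    have "poly ?fg r = 0" using mf r by (metis dvd_def mult_zero_left poly_mult)
    hence rRg: "r \<in> Rg - {\<gamma>}" using ne unfolding Rg_def by auto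
    have "poly k r = 0" using mk r by (metis dvd_def mult_zero_left poly_mult)
    hence bRb: "\<theta> - c * r \<in> Rb" unfolding k_def Rb_def by (simp add: poly_pcompose mult.commute)
    have "(\<theta> - c * r - \<beta>) / (\<gamma> - r) = c" using ne unfolding \<theta>_def by (simp add: field_simps)
    hence "c \<in> C" unfolding C_def using rRg bRb by force
    thus False using c by simp
  qed
  have m0: "?m \<noteq> 0" using min_poly_nz[OF E algEg] .
  have "poly ?m \<gamma> = 0" using min_poly_root[OF E algEg] .
  then obtain s where s: "?m = [:-\<gamma>, 1:] * s" using poly_eq_0_iff_dvd by blast
  have "order \<gamma> ?m \<le> order \<gamma> ?fg" using dvd_imp_order_le[OF min_poly_nz[OF K algg] mf] .
  moreover have "order \<gamma> ?fg \<le> 1" using sep unfolding rsquarefree_def by (metis le_refl zero_le_one)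
  ultimately have o1: "order \<gamma> ?m \<le> 1" by simp
  have "degree s = 0"
  proof (rule ccontr)
    assume "degree s \<noteq> 0"
    then obtain r where r: "poly s r = 0" using alg_closedD[OF ac] by blast
    hence "poly ?m r = 0" using s by simp
    hence "r = \<gamma>" using only by blast
    hence "order \<gamma> ?m \<ge> 2" using order_ge2_of_two_roots[OF s m0] r by simp
    thus False using o1 by simp
  qed
  then obtain d where d: "s = [:d:]" by (metis degree_0_id)
  have "lead_coeff ?m = d" using s d m0 by (auto simp: lead_coeff_mult)
  hence "d = 1" using min_poly_monic[OF E algEg] by simp
  hence "?m = [:-\<gamma>, 1:]" using s d by simp
  hence "coeff ?m 0 = - \<gamma>" by simp
  hence "- \<gamma> \<in> ?E" using poly_overD[OF min_poly_over[OF E algEg]] by metis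
  hence gE: "\<gamma> \<in> ?E" using sf_uminus[OF E] by fastforce
  have bE: "\<beta> \<in> ?E" using sf_diff[OF E thE sf_mult[OF E cE gE]] unfolding \<theta>_def by simp
  have "gen_field (insert \<beta> (insert \<gamma> K)) = ?E"
  proof
    show "gen_field (insert \<beta> (insert \<gamma> K)) \<subseteq> ?E" using bE gE KE by (intro gen_field_min[OF E]) auto
    have "\<theta> \<in> gen_field (insert \<beta> (insert \<gamma> K))" unfolding \<theta>_def
      using gen_field_sup[of "insert \<beta> (insert \<gamma> K)"] c(1)
      by (intro sf_add[OF gen_field_sf] sf_mult[OF gen_field_sf]) auto
    thus "?E \<subseteq> gen_field (insert \<beta> (insert \<gamma> K))"
      using gen_field_sup[of "insert \<beta> (insert \<gamma> K)"] by (intro gen_field_min[OF gen_field_sf]) auto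
  qed
  thus ?thesis by blast
qed

lemma prim2:
  assumes K: "is_subfield K" and alg: "\<forall>z. algebraic_over K z"
    and ac: "alg_closed TYPE('a::field)"
    and sep: "rsquarefree (min_poly K (\<gamma>::'a))"
  shows "\<exists>\<theta>. gen_field (insert \<beta> (insert \<gamma> K)) = gen_field (insert \<theta> K)"
  using prim2_finite[OF K _ alg] prim2_infinite[OF K _ alg ac sep] by blast

lemma finite_ext_gen:
  assumes "finite_ext K E" "is_basis_over K E B"
  shows "E = gen_field (K \<union> B)"
proof
  have K: "is_subfield K" and E: "is_subfield E" and KE: "K \<subseteq> E" using assms unfolding finite_ext_def by auto
  have B: "B \<subseteq> E" "E = {\<Sum>b\<in>B. c b * b | c. \<forall>b\<in>B. c b \<in> K}" using assms(2) unfolding is_basis_over_def by auto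
  show "gen_field (K \<union> B) \<subseteq> E" using B KE by (intro gen_field_min[OF E]) auto
  show "E \<subseteq> gen_field (K \<union> B)"
  proof
    fix z assume "z \<in> E"
    then obtain c where c: "\<forall>b\<in>B. c b \<in> K" "z = (\<Sum>b\<in>B. c b * b)" using B(2) by blast
    show "z \<in> gen_field (K \<union> B)" unfolding c(2)
      using c(1) gen_field_sup[of "K \<union> B"] by (intro sf_sum[OF gen_field_sf] sf_mult[OF gen_field_sf]) auto
  qed
qed

lemma primitive_element:
  assumes K: "is_subfield K" and alg: "\<forall>z. algebraic_over K z" and pf: "perfect_field K"
    and ac: "alg_closed TYPE('a::field)" and fe: "finite_ext K (E::'a set)"
  shows "\<exists>\<alpha>. gen_field (insert \<alpha> K) = E"
proof -
  obtain B where B: "is_basis_over K E B" using fe unfolding finite_ext_def by blast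
  have fB: "finite B" using B unfolding is_basis_over_def by auto
  have "\<exists>\<alpha>. gen_field (K \<union> B) = gen_field (insert \<alpha> K)" using fB
  proof (induction B rule: finite_induct)
    case empty
    have "insert 0 K = K" using sf0[OF K] by blast
    thus ?case using gen_field_id[OF K] by (intro exI[of _ 0]) simp
  next
    case (insert b B)
    then obtain \<alpha> where a: "gen_field (K \<union> B) = gen_field (insert \<alpha> K)" by blast
    have "gen_field (K \<union> insert b B) = gen_field (insert b (gen_field (K \<union> B)))"
      using gen_field_insert_gen[of b "K \<union> B"] by simp
    also have "\<dots> = gen_field (insert b (insert \<alpha> K))" unfolding a gen_field_insert_gen ..
    finally show ?case using prim2[OF K alg ac perfect_separable[OF K pf], of \<alpha> b] alg by metis
  qed
  thus ?thesis using finite_ext_gen[OF fe B] by metis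
qed


section \<open>Linear algebra over a subfield: exchange lemma\<close>

definition lspan :: "'a::field set \<Rightarrow> 'a set \<Rightarrow> 'a set" where
  "lspan K S = {\<Sum>s\<in>S. c s * s | c. \<forall>s\<in>S. c s \<in> K}"

definition lindep :: "'a::field set \<Rightarrow> 'a set \<Rightarrow> bool" where
  "lindep K I \<longleftrightarrow> (\<forall>c. (\<forall>b\<in>I. c b \<in> K) \<and> (\<Sum>b\<in>I. c b * b) = 0 \<longrightarrow> (\<forall>b\<in>I. c b = 0))"

context
  fixes K :: "'a::field set"
  assumes K: "is_subfield K"
begin

lemma lspan_0: "0 \<in> lspan K S"
  unfolding lspan_def using sf0[OF K] by (intro CollectI exI[of _ "\<lambda>_. 0"]) auto

lemma lspan_add: "x \<in> lspan K S \<Longrightarrow> y \<in> lspan K S \<Longrightarrow> x + y \<in> lspan K S"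
proof -
  assume "x \<in> lspan K S" "y \<in> lspan K S"
  then obtain c d where c: "\<forall>s\<in>S. c s \<in> K" "x = (\<Sum>s\<in>S. c s * s)"
    and d: "\<forall>s\<in>S. d s \<in> K" "y = (\<Sum>s\<in>S. d s * s)" unfolding lspan_def by blast
  have "x + y = (\<Sum>s\<in>S. (c s + d s) * s)" using c d by (simp add: sum.distrib algebra_simps)
  moreover have "\<forall>s\<in>S. c s + d s \<in> K" using c d sf_add[OF K] by blast
  ultimately show ?thesis unfolding lspan_def by (intro CollectI exI[of _ "\<lambda>s. c s + d s"]) simp
qed

lemma lspan_smult: "k \<in> K \<Longrightarrow> x \<in> lspan K S \<Longrightarrow> k * x \<in> lspan K S"
proof -
  assume k: "k \<in> K" and "x \<in> lspan K S"
  then obtain c where c: "\<forall>s\<in>S. c s \<in> K" "x = (\<Sum>s\<in>S. c s * s)" unfolding lspan_def by blast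
  have "k * x = (\<Sum>s\<in>S. (k * c s) * s)" using c by (simp add: sum_distrib_left mult.assoc)
  moreover have "\<forall>s\<in>S. k * c s \<in> K" using c k sf_mult[OF K] by blast
  ultimately show ?thesis unfolding lspan_def by (intro CollectI exI[of _ "\<lambda>s. k * c s"]) simp
qed

lemma lspan_diff: "x \<in> lspan K S \<Longrightarrow> y \<in> lspan K S \<Longrightarrow> x - y \<in> lspan K S"
  using lspan_add[of x S "(- 1) * y"] lspan_smult[of "- 1" y S] sf_uminus[OF K sf1[OF K]] by simp

lemma lspan_insert:
  assumes fin: "finite S0" and s: "s \<notin> S0" and x: "x \<in> lspan K (insert s S0)"
  shows "\<exists>a\<in>K. x - a * s \<in> lspan K S0"
proof -
  obtain c where c: "\<forall>t\<in>insert s S0. c t \<in> K" "x = (\<Sum>t\<in>insert s S0. c t * t)"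
    using x unfolding lspan_def by blast
  have "x - c s * s = (\<Sum>t\<in>S0. c t * t)" using c fin s by simp
  thus ?thesis using c unfolding lspan_def by force
qed

lemma lspan_empty: "lspan K {} = {0}"
  unfolding lspan_def by auto

lemma lindep_subset:
  assumes fin: "finite I" and ind: "lindep K I" and J: "J \<subseteq> I"
  shows "lindep K J"
  unfolding lindep_def
proof (intro allI impI ballI)
  fix c b assume c: "(\<forall>b\<in>J. c b \<in> K) \<and> (\<Sum>b\<in>J. c b * b) = 0" and b: "b \<in> J"
  define c' where "c' v = (if v \<in> J then c v else 0)" for v
  have "(\<Sum>v\<in>I. c' v * v) = (\<Sum>v\<in>J. c' v * v)"
    using fin J by (intro sum.mono_neutral_right) (auto simp: c'_def)
  also have "\<dots> = (\<Sum>v\<in>J. c v * v)" by (rule sum.cong) (auto simp: c'_def)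
  finally have "(\<Sum>v\<in>I. c' v * v) = 0" using c by simp
  moreover have "\<forall>v\<in>I. c' v \<in> K" using c sf0[OF K] by (auto simp: c'_def)
  ultimately have "\<forall>v\<in>I. c' v = 0" using ind unfolding lindep_def by blast
  hence "c' b = 0" using b J by blast
  thus "c b = 0" using b by (simp add: c'_def)
qed

lemma lindep_no_zero: "finite I \<Longrightarrow> lindep K I \<Longrightarrow> 0 \<notin> I"
proof
  assume fin: "finite I" and ind: "lindep K I" and z: "0 \<in> I"
  have "lindep K {0}" using lindep_subset[OF fin ind] z by blast
  hence "\<forall>b\<in>{0}. (\<lambda>_. 1::'a) b = 0" unfolding lindep_def using sf1[OF K] by fastforce
  thus False by simp
qed

lemma exchange:
  assumes finS: "finite S"
  shows "finite I \<Longrightarrow> lindep K I \<Longrightarrow> I \<subseteq> lspan K S \<Longrightarrow> card I \<le> card S"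
  using finS
proof (induction S arbitrary: I rule: finite_induct)
  case empty
  hence "I \<subseteq> {0}" using lspan_empty by simp
  hence "I = {}" using lindep_no_zero[OF empty.prems(1,2)] by blast
  thus ?case by simp
next
  case (insert s S0)
  have fI: "finite I" and ind: "lindep K I" and sub: "I \<subseteq> lspan K (insert s S0)" using insert.prems by auto
  have "\<forall>v\<in>I. \<exists>a. a \<in> K \<and> v - a * s \<in> lspan K S0"
    using lspan_insert[OF insert.hyps(1,2)] sub by blast
  then obtain a where a: "\<And>v. v \<in> I \<Longrightarrow> a v \<in> K \<and> v - a v * s \<in> lspan K S0"
    using bchoice[of I "\<lambda>v a. a \<in> K \<and> v - a * s \<in> lspan K S0"] by blast
  show ?case
  proof (cases "\<forall>v\<in>I. a v = 0")
    case True
    hence "I \<subseteq> lspan K S0" using a by auto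
    hence "card I \<le> card S0" using insert.IH[OF fI ind] by blast
    thus ?thesis using insert.hyps by simp
  next
    case False
    then obtain v0 where v0: "v0 \<in> I" "a v0 \<noteq> 0" by blast
    define t where "t v = a v / a v0" for v
    define \<phi> where "\<phi> v = v - t v * v0" for v
    let ?T = "I - {v0}"
    have tK: "t v \<in> K" if "v \<in> I" for v unfolding t_def using a[OF that] a[OF v0(1)] sf_divide[OF K] by blast
    have inj: "inj_on \<phi> ?T"
    proof (rule inj_onI, rule ccontr)
      fix v u assume v: "v \<in> ?T" and u: "u \<in> ?T" and eq: "\<phi> v = \<phi> u" and ne: "v \<noteq> u"
      have sub3: "{v, u, v0} \<subseteq> I" using v u v0 by auto
      have ind3: "lindep K {v, u, v0}" using lindep_subset[OF fI ind sub3] .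
      define c where "c w = (if w = v then 1 else if w = u then - 1 else t u - t v)" for w
      have nv: "v0 \<noteq> v" "v0 \<noteq> u" using v u by auto
      have "(\<Sum>w\<in>{v, u, v0}. c w * w) = v - u + (t u - t v) * v0"
        using nv ne by (simp add: c_def)
      also have "\<dots> = 0" using eq unfolding \<phi>_def by (simp add: algebra_simps)
      finally have "(\<Sum>w\<in>{v, u, v0}. c w * w) = 0" .
      moreover have "\<forall>w\<in>{v, u, v0}. c w \<in> K"
        using sf1[OF K] sf_uminus[OF K sf1[OF K]] sf_diff[OF K tK tK] v u ne nv by (auto simp: c_def)
      ultimately have "c v = 0" using ind3 unfolding lindep_def by blast
      thus False by (simp add: c_def)
    qed
    have sub': "\<phi> ` ?T \<subseteq> lspan K S0"
    proof
      fix x assume "x \<in> \<phi> ` ?T"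
      then obtain v where v: "v \<in> ?T" "x = \<phi> v" by blast
      have "t v * a v0 = a v" unfolding t_def using v0 by simp
      hence "\<phi> v = (v - a v * s) - t v * (v0 - a v0 * s)" unfolding \<phi>_def by (simp add: algebra_simps)
      thus "x \<in> lspan K S0" using v a[of v] a[OF v0(1)] tK[of v]
        by (auto intro!: lspan_diff lspan_smult)
    qed
    have ind': "lindep K (\<phi> ` ?T)"
      unfolding lindep_def
    proof (intro allI impI ballI)
      fix d x assume d: "(\<forall>b\<in>\<phi> ` ?T. d b \<in> K) \<and> (\<Sum>b\<in>\<phi> ` ?T. d b * b) = 0" and x: "x \<in> \<phi> ` ?T"
      define c where "c w = (if w = v0 then - (\<Sum>v\<in>?T. d (\<phi> v) * t v) else d (\<phi> w))" for w
      have "0 = (\<Sum>v\<in>?T. d (\<phi> v) * \<phi> v)" using d sum.reindex[OF inj, of "\<lambda>b. d b * b"] by simp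
      also have "\<dots> = (\<Sum>v\<in>?T. d (\<phi> v) * v) - (\<Sum>v\<in>?T. d (\<phi> v) * t v) * v0"
        unfolding \<phi>_def by (simp add: algebra_simps sum_subtractf sum_distrib_right sum_distrib_left)
      also have "\<dots> = (\<Sum>v\<in>?T. c v * v) + c v0 * v0" by (simp add: c_def)
      also have "\<dots> = (\<Sum>v\<in>I. c v * v)"
        using fI v0(1) by (simp add: sum.remove[of I v0] add.commute)
      finally have s0: "(\<Sum>v\<in>I. c v * v) = 0" by simp
      have cK: "\<forall>v\<in>I. c v \<in> K"
        using d tK by (auto simp: c_def intro!: sf_uminus[OF K] sf_sum[OF K] sf_mult[OF K])
      have "\<forall>v\<in>I. c v = 0" using ind s0 cK unfolding lindep_def by blast
      then obtain v where "v \<in> ?T" "x = \<phi> v" "c v = 0" using x by blast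
      thus "d x = 0" by (simp add: c_def)
    qed
    have "card (\<phi> ` ?T) \<le> card S0" using insert.IH[OF _ ind' sub'] fI by blast
    moreover have "card (\<phi> ` ?T) = card I - 1" using card_image[OF inj] v0 fI by simp
    moreover have "card I > 0" using v0 fI card_gt_0_iff by blast
    ultimately show ?thesis using insert.hyps by simp
  qed
qed

end

lemma basis_lspan: "is_basis_over K F B \<Longrightarrow> F = lspan K B \<and> lindep K B \<and> finite B \<and> B \<subseteq> F"
  unfolding is_basis_over_def lspan_def lindep_def by blast

lemma basis_card_eq:
  assumes K: "is_subfield K" and B1: "is_basis_over K F B1" and B2: "is_basis_over K F B2"
  shows "card B1 = card B2"
proof -
  have "card B1 \<le> card B2" using exchange[OF K, of B2 B1] basis_lspan[OF B1] basis_lspan[OF B2] by blast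
  moreover have "card B2 \<le> card B1" using exchange[OF K, of B1 B2] basis_lspan[OF B1] basis_lspan[OF B2] by blast
  ultimately show ?thesis by simp
qed

lemma ext_degree_eq:
  assumes K: "is_subfield K" and B: "is_basis_over K F B"
  shows "ext_degree K F = card B"
proof -
  have S: "is_basis_over K F (SOME B. is_basis_over K F B)" using B by (rule someI)
  have ex: "\<exists>B. is_basis_over K F B" using B by blast
  have "ext_degree K F = card (SOME B. is_basis_over K F B)" unfolding ext_degree_def using ex by simp
  also have "\<dots> = card B" using basis_card_eq[OF K S B] .
  finally show ?thesis .
qed

section \<open>Degree of a simple extension\<close>

lemma simple_ext_degree:
  assumes K: "is_subfield K" and alg: "\<forall>z. algebraic_over K z"
    and fe: "finite_ext K F" and F: "F = gen_field (insert \<theta> K)"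
  shows "ext_degree K F = degree (min_poly K \<theta>)"
proof -
  let ?h = "min_poly K \<theta>" let ?n = "degree ?h"
  have algt: "algebraic_over K \<theta>" using alg by blast
  obtain B where B: "is_basis_over K F B" using fe unfolding finite_ext_def by blast
  define P where "P = (\<lambda>i. \<theta> ^ i) ` {..<?n}"
  have small: "q = 0" if q: "poly_over K (q::'a poly)" "poly q \<theta> = 0" "degree q < ?n" for q
  proof (rule ccontr)
    assume "q \<noteq> 0"
    hence "?n \<le> degree q" using min_poly_min[OF K algt _ q(1,2)] by blast
    thus False using q(3) by simp
  qed
  have inj: "inj_on (\<lambda>i. \<theta> ^ i) {..<?n}"
  proof (rule inj_onI, rule ccontr)
    fix i j assume i: "i \<in> {..<?n}" and j: "j \<in> {..<?n}" and eq: "\<theta> ^ i = \<theta> ^ j" and ne: "i \<noteq> j"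
    define q where "q = Polynomial.monom 1 i - Polynomial.monom (1::'a) j"
    have "poly_over K q" unfolding q_def using K by (intro poly_over_diff poly_over_monom sf1)
    moreover have "poly q \<theta> = 0" unfolding q_def using eq by (simp add: poly_monom)
    moreover have "degree q < ?n" unfolding q_def using i j
      by (auto intro: le_less_trans[OF degree_diff_le_max] simp: degree_monom_eq)
    ultimately have "q = 0" using small by blast
    hence "coeff q i = 0" by simp
    thus False unfolding q_def using ne by simp
  qed
  have cardP: "card P = ?n" unfolding P_def using card_image[OF inj] by simp
  have finP: "finite P" unfolding P_def by simp
  have indP: "lindep K P"
    unfolding lindep_def
  proof (intro allI impI ballI)
    fix c b assume c: "(\<forall>b\<in>P. c b \<in> K) \<and> (\<Sum>b\<in>P. c b * b) = 0" and b: "b \<in> P"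
    define q where "q = (\<Sum>i<?n. Polynomial.monom (c (\<theta> ^ i)) i)"
    have "poly q \<theta> = (\<Sum>i<?n. c (\<theta> ^ i) * \<theta> ^ i)" unfolding q_def by (simp add: poly_sum poly_monom)
    also have "\<dots> = (\<Sum>b\<in>P. c b * b)" unfolding P_def using sum.reindex[OF inj, of "\<lambda>b. c b * b"] by simp
    finally have q0: "poly q \<theta> = 0" using c by simp
    have qK: "poly_over K q" unfolding q_def using c K unfolding P_def
      by (intro poly_over_sum poly_over_monom) auto
    have "degree q < ?n"
    proof -
      have "degree q \<le> ?n - 1" unfolding q_def
        by (rule degree_sum_le) (auto intro: order_trans[OF degree_monom_le])
      thus ?thesis using min_poly_deg_pos[OF K algt] by linarith
    qed
    hence "q = 0" using small qK q0 by blast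
    obtain i where i: "i < ?n" "b = \<theta> ^ i" using b unfolding P_def by blast
    have "coeff q i = c (\<theta> ^ i)" unfolding q_def using i by (simp add: coeff_sum)
    thus "c b = 0" using \<open>q = 0\<close> i by simp
  qed
  have FP: "F \<subseteq> lspan K P"
  proof
    fix z assume "z \<in> F"
    then obtain p where p: "poly_over K p" "z = poly p \<theta>" unfolding F simple_ext_char[OF K alg] by blast
    define r where "r = p mod ?h"
    have r: "poly_over K r" "poly r \<theta> = z" "r = 0 \<or> degree r < ?n"
      using simple_ext_reduce[OF K algt p(1)] p(2) unfolding r_def by auto
    define c where "c b = coeff r (the_inv_into {..<?n} (\<lambda>i. \<theta> ^ i) b)" for b
    have "z = (\<Sum>i\<le>degree r. coeff r i * \<theta> ^ i)" using r(2) by (simp add: poly_altdef)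
    also have "\<dots> = (\<Sum>i<?n. coeff r i * \<theta> ^ i)"
    proof (cases "r = 0")
      case True thus ?thesis by simp
    next
      case False hence "degree r < ?n" using r(3) by simp
      thus ?thesis by (intro sum.mono_neutral_left) (auto simp: coeff_eq_0)
    qed
    also have "\<dots> = (\<Sum>i<?n. c (\<theta> ^ i) * \<theta> ^ i)"
      by (rule sum.cong) (auto simp: c_def the_inv_into_f_f[OF inj])
    also have "\<dots> = (\<Sum>b\<in>P. c b * b)" unfolding P_def using sum.reindex[OF inj, of "\<lambda>b. c b * b"] by simp
    finally have "z = (\<Sum>b\<in>P. c b * b)" .
    moreover have "\<forall>b\<in>P. c b \<in> K" unfolding c_def using r(1) poly_overD by blast
    ultimately show "z \<in> lspan K P" unfolding lspan_def by blast
  qed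
  have PF: "P \<subseteq> lspan K B"
  proof -
    have "P \<subseteq> F" unfolding P_def F using gen_field_sup[of "insert \<theta> K"]
      by (auto intro!: sf_power[OF gen_field_sf])
    thus ?thesis using basis_lspan[OF B] by blast
  qed
  have "card P \<le> card B" using exchange[OF K _ finP indP PF] basis_lspan[OF B] by blast
  moreover have "card B \<le> card P" using exchange[OF K finP _ _] basis_lspan[OF B] FP by blast
  ultimately show ?thesis using ext_degree_eq[OF K B] cardP by simp
qed


lemma comp_simple:
  assumes L: "is_subfield L" and KL: "K \<subseteq> L" and F: "F = gen_field (insert \<theta> K)"
  shows "compositum L F = gen_field (insert \<theta> L)"
  unfolding compositum_def
proof
  have "F \<subseteq> gen_field (insert \<theta> L)" unfolding F using KL by (intro gen_field_mono) auto
  moreover have "L \<subseteq> gen_field (insert \<theta> L)" using gen_field_sup by blast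
  ultimately show "gen_field (L \<union> F) \<subseteq> gen_field (insert \<theta> L)" by (intro gen_field_min[OF gen_field_sf]) auto
  have "\<theta> \<in> F" unfolding F using gen_field_sup by blast
  hence "insert \<theta> L \<subseteq> gen_field (L \<union> F)" using gen_field_sup[of "L \<union> F"] by blast
  thus "gen_field (insert \<theta> L) \<subseteq> gen_field (L \<union> F)" by (intro gen_field_min[OF gen_field_sf])
qed

lemma gen_insert_super:
  assumes M: "is_subfield M" and LM: "L \<subseteq> M" and KL: "K \<subseteq> L" and Mmu: "M = gen_field (insert \<mu> K)"
  shows "M = gen_field (insert \<mu> L)"
proof
  show "M \<subseteq> gen_field (insert \<mu> L)" unfolding Mmu using KL by (intro gen_field_mono) auto
  have "\<mu> \<in> M" unfolding Mmu using gen_field_sup by blast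
  thus "gen_field (insert \<mu> L) \<subseteq> M" using LM by (intro gen_field_min[OF M]) auto
qed

lemma min_poly_normal_eq:
  assumes ac: "alg_closed TYPE('a::field)" and K: "is_subfield K" and E: "is_subfield E"
    and KE: "K \<subseteq> E" and F: "is_subfield F" and EF: "E \<inter> F \<subseteq> K"
    and alg: "algebraic_over K (\<theta>::'a)"
    and nrm: "\<forall>b. poly (min_poly K \<theta>) b = 0 \<longrightarrow> b \<in> F"
  shows "min_poly E \<theta> = min_poly K \<theta>"
proof -
  have algE: "algebraic_over E \<theta>" using algebraic_mono[OF alg KE] .
  let ?m = "min_poly E \<theta>"
  have hE: "poly_over E (min_poly K \<theta>)" using poly_over_mono[OF min_poly_over[OF K alg] KE] .
  have dv: "?m dvd min_poly K \<theta>" using min_poly_dvd[OF E algE hE min_poly_root[OF K alg]] .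
  have "poly_over F ?m"
  proof (rule monic_roots_over[OF ac F min_poly_monic[OF E algE]])
    fix r assume "poly ?m r = 0"
    hence "poly (min_poly K \<theta>) r = 0" using dv by (metis dvd_def mult_zero_left poly_mult)
    thus "r \<in> F" using nrm by blast
  qed
  hence "poly_over K ?m" using min_poly_over[OF E algE] EF unfolding poly_over_def by blast
  thus ?thesis using min_poly_descend[OF K E KE alg] by blast
qed

lemma transfer_root:
  assumes K: "is_subfield K" and alg: "algebraic_over K \<gamma>" and R: "poly_over K R" "poly R \<gamma> = 0"
    and \<beta>: "poly (min_poly K \<gamma>) \<beta> = 0"
  shows "poly R \<beta> = 0"
proof -
  have "min_poly K \<gamma> dvd R" using min_poly_dvd[OF K alg R] .
  thus ?thesis using \<beta> by (metis dvd_def mult_zero_left poly_mult)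
qed

lemma hom_on_id: "hom_on K id"
  unfolding hom_on_def by simp

lemma some_primitive:
  assumes "\<exists>\<alpha>. gen_field (insert \<alpha> K) = L"
  shows "(SOME \<alpha>. \<alpha> \<in> L \<and> gen_field (insert \<alpha> K) = L) \<in> L \<and>
         gen_field (insert (SOME \<alpha>. \<alpha> \<in> L \<and> gen_field (insert \<alpha> K) = L) K) = L"
proof -
  obtain \<alpha> where a: "gen_field (insert \<alpha> K) = L" using assms by blast
  have "\<alpha> \<in> L" using a gen_field_sup by blast
  hence "\<exists>\<alpha>. \<alpha> \<in> L \<and> gen_field (insert \<alpha> K) = L" using a by blast
  thus ?thesis by (rule someI_ex)
qed

theorem mainTheorem5:
  fixes K L M F :: "'a::field set" and d :: nat
  assumes "alg_closed TYPE('a)"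
    and "\<forall>x::'a. algebraic_over K x"
    and "is_subfield K" and "perfect_field K"
    and "finite_ext K L" and "finite_ext K M" and "L \<subseteq> M"
    and "galois_ext K F" and "d = ext_degree K F"
    and "strong_cluster_magnification K M F (compositum M F)"
    and "strong_cluster_magnification K L F (compositum L F)"
  shows "root_capacity K (compositum M F) (compositum L F) = d * root_capacity K M L"
proof -
  note ac = assms(1) and alg = assms(2) and K = assms(3) and pf = assms(4)
  note feL = assms(5) and feM = assms(6) and LM = assms(7) and gal = assms(8) and d_def = assms(9)
  have feF: "finite_ext K F" and nrm: "\<forall>a\<in>F. \<forall>b. poly (min_poly K a) b = 0 \<longrightarrow> b \<in> F"
    and sepF: "\<forall>a\<in>F. rsquarefree (min_poly K a)" using gal unfolding galois_ext_def by auto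
  have NF: "galois_closure K M \<inter> F = K" using assms(10) unfolding strong_cluster_magnification_def by auto
  have L: "is_subfield L" and KL: "K \<subseteq> L" using feL unfolding finite_ext_def by auto
  have M: "is_subfield M" and KM: "K \<subseteq> M" using feM unfolding finite_ext_def by auto
  have Fsf: "is_subfield F" and KF: "K \<subseteq> F" using feF unfolding finite_ext_def by auto
  let ?N = "galois_closure K M"
  have N: "is_subfield ?N" unfolding galois_closure_def by (rule gen_field_sf)
  have MN: "M \<subseteq> ?N"
  proof -
    have "K_embedding K M id" unfolding K_embedding_def by simp
    hence "id ` M \<in> {\<sigma> ` M | \<sigma>. K_embedding K M \<sigma>}" by blast
    hence "id ` M \<subseteq> \<Union>{\<sigma> ` M | \<sigma>. K_embedding K M \<sigma>}" by (rule Union_upper)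
    hence "M \<subseteq> \<Union>{\<sigma> ` M | \<sigma>. K_embedding K M \<sigma>}" by simp
    thus ?thesis unfolding galois_closure_def using gen_field_sup by blast
  qed
  have KN: "K \<subseteq> ?N" using KM MN by blast
  have algL: "\<forall>z. algebraic_over L z" using alg_all_mono[OF alg KL] .
  have algM: "\<forall>z. algebraic_over M z" using alg_all_mono[OF alg KM] .

  obtain \<theta> where F\<theta>: "gen_field (insert \<theta> K) = F" using primitive_element[OF K alg pf ac feF] by blast
  have \<theta>F: "\<theta> \<in> F" using F\<theta> gen_field_sup by blast
  let ?h = "min_poly K \<theta>"
  have alg\<theta>: "algebraic_over K \<theta>" using alg by blast
  have hK: "poly_over K ?h" using min_poly_over[OF K alg\<theta>] .
  have dh: "d = degree ?h" unfolding d_def using simple_ext_degree[OF K alg feF F\<theta>[symmetric]] .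
  have cardRh: "card {t. poly ?h t = 0} = d"
    using card_roots_rsquarefree[OF ac] sepF \<theta>F dh by simp
  have RhF: "\<And>t. poly ?h t = 0 \<Longrightarrow> t \<in> F" using nrm \<theta>F by blast

  define \<alpha> where "\<alpha> = (SOME \<alpha>. \<alpha> \<in> L \<and> gen_field (insert \<alpha> K) = L)"
  have \<alpha>: "\<alpha> \<in> L" "gen_field (insert \<alpha> K) = L"
    using some_primitive[OF primitive_element[OF K alg pf ac feL]] unfolding \<alpha>_def by auto
  let ?f = "min_poly K \<alpha>"
  have alg\<alpha>: "algebraic_over K \<alpha>" using alg by blast
  have fK: "poly_over K ?f" using min_poly_over[OF K alg\<alpha>] .

  let ?L' = "compositum L F" and ?M' = "compositum M F"
  have L'eq: "?L' = gen_field (insert \<theta> L)" using comp_simple[OF L KL F\<theta>[symmetric]] .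
  have M'eq: "?M' = gen_field (insert \<theta> M)" using comp_simple[OF M KM F\<theta>[symmetric]] .
  have M': "is_subfield ?M'" unfolding compositum_def by (rule gen_field_sf)
  have L': "is_subfield ?L'" unfolding compositum_def by (rule gen_field_sf)
  have MM': "M \<subseteq> ?M'" and FM': "F \<subseteq> ?M'" unfolding compositum_def using gen_field_sup by blast+
  have KM': "K \<subseteq> ?M'" using KM MM' by blast
  have LL': "L \<subseteq> ?L'" and FL': "F \<subseteq> ?L'" unfolding compositum_def using gen_field_sup by blast+
  have "\<exists>\<gamma>. gen_field (insert \<gamma> K) = ?L'"
  proof -
    have "?L' = gen_field (insert \<theta> (gen_field (insert \<alpha> K)))" unfolding L'eq \<alpha>(2) ..
    also have "\<dots> = gen_field (insert \<theta> (insert \<alpha> K))" by (rule gen_field_insert_gen)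
    finally show ?thesis using prim2[OF K alg ac perfect_separable[OF K pf alg\<alpha>], of \<theta>] by metis
  qed
  define \<gamma> where "\<gamma> = (SOME \<gamma>. \<gamma> \<in> ?L' \<and> gen_field (insert \<gamma> K) = ?L')"
  have \<gamma>: "\<gamma> \<in> ?L'" "gen_field (insert \<gamma> K) = ?L'"
    using some_primitive[OF \<open>\<exists>\<gamma>. gen_field (insert \<gamma> K) = ?L'\<close>] unfolding \<gamma>_def by auto
  let ?g = "min_poly K \<gamma>"
  have alg\<gamma>: "algebraic_over K \<gamma>" using alg by blast

  have LF: "L \<inter> F \<subseteq> K" using NF LM MN by blast
  have hL: "min_poly L \<theta> = ?h"
    using min_poly_normal_eq[OF ac K L KL Fsf LF alg\<theta>] RhF by blast
  have hN: "min_poly ?N \<theta> = ?h"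
    using min_poly_normal_eq[OF ac K N KN Fsf _ alg\<theta>] RhF NF by blast

  have key: "y \<in> M" if y: "y \<in> ?N" "y \<in> ?M'" for y
  proof -
    obtain p where p: "poly_over M p" "y = poly p \<theta>"
      using y(2) unfolding M'eq simple_ext_char[OF M algM] by blast
    have hM: "poly_over M ?h" using poly_over_mono[OF hK KM] .
    define r where "r = p mod ?h"
    have rM: "poly_over M r" unfolding r_def using div_mod_over[OF M hM p(1)] by simp
    have "poly p \<theta> = poly (?h * (p div ?h)) \<theta> + poly r \<theta>"
      unfolding r_def by (metis div_mult_mod_eq mult.commute poly_add)
    hence ry: "poly r \<theta> = y" using p(2) min_poly_root[OF K alg\<theta>] by simp
    have rdeg: "r = 0 \<or> degree r < degree ?h"
      unfolding r_def using degree_mod_less[OF min_poly_nz[OF K alg\<theta>]] .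
    define q where "q = r - [:y:]"
    have qN: "poly_over ?N q" unfolding q_def using poly_over_mono[OF rM MN] y(1) N
      by (intro poly_over_diff poly_over_const) auto
    have q0: "poly q \<theta> = 0" unfolding q_def using ry by simp
    have dpos: "degree ?h > 0" using min_poly_deg_pos[OF K alg\<theta>] .
    have "degree q < degree ?h"
    proof -
      have "degree q \<le> max (degree r) (degree [:y:])" unfolding q_def by (rule degree_diff_le_max)
      thus ?thesis using rdeg dpos by auto
    qed
    hence "q = 0"
    proof (rule contrapos_pp)
      assume "q \<noteq> 0"
      hence "degree (min_poly ?N \<theta>) \<le> degree q"
        using min_poly_min[OF N algebraic_mono[OF alg\<theta> KN] _ qN q0] by blast
      thus "\<not> degree q < degree ?h" using hN by simp
    qed
    hence "r = [:y:]" unfolding q_def by simp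
    hence "coeff r 0 = y" by simp
    thus ?thesis using poly_overD[OF rM, of 0] by simp
  qed

  have rootsN: "a \<in> ?N" if a: "poly ?f a = 0" for a
  proof -
    obtain \<sigma>1 where s1: "hom_on (gen_field (insert \<alpha> K)) \<sigma>1" "\<forall>x\<in>K. \<sigma>1 x = id x" "\<sigma>1 \<alpha> = a"
      using ext_hom[OF K alg hom_on_id, of \<alpha> a] a by auto
    have s1L: "hom_on L \<sigma>1" using s1(1) \<alpha>(2) by simp
    obtain \<mu> where \<mu>: "gen_field (insert \<mu> K) = M" using primitive_element[OF K alg pf ac feM] by blast
    have Mmu: "M = gen_field (insert \<mu> L)" using gen_insert_super[OF M LM KL \<mu>[symmetric]] .
    let ?mL = "min_poly L \<mu>"
    have algLmu: "algebraic_over L \<mu>" using algL by blast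
    have "degree (map_poly \<sigma>1 ?mL) = degree ?mL"
      using degree_map_hom[OF L s1L min_poly_over[OF L algLmu]] .
    hence "degree (map_poly \<sigma>1 ?mL) > 0" using min_poly_deg_pos[OF L algLmu] by simp
    then obtain \<mu>' where "poly (map_poly \<sigma>1 ?mL) \<mu>' = 0" using alg_closedD[OF ac] by blast
    then obtain \<sigma>2 where s2: "hom_on (gen_field (insert \<mu> L)) \<sigma>2" "\<forall>x\<in>L. \<sigma>2 x = \<sigma>1 x"
      using ext_hom[OF L algL s1L] by blast
    have "K_embedding K M \<sigma>2"
      unfolding K_embedding_def
    proof (intro conjI ballI)
      fix x assume "x \<in> K" thus "\<sigma>2 x = x" using s1(2) s2(2) KL by auto
    next
      show "\<sigma>2 1 = 1" using s2(1) unfolding hom_on_def by simp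
    next
      fix x y assume "x \<in> M" "y \<in> M"
      thus "\<sigma>2 (x + y) = \<sigma>2 x + \<sigma>2 y" "\<sigma>2 (x * y) = \<sigma>2 x * \<sigma>2 y"
        using s2(1) Mmu unfolding hom_on_def by auto
    qed
    moreover have "a = \<sigma>2 \<alpha>" using s1(3) s2(2) \<alpha>(1) by simp
    ultimately have "\<sigma>2 ` M \<in> {\<sigma> ` M | \<sigma>. K_embedding K M \<sigma>}" "a \<in> \<sigma>2 ` M" using \<alpha>(1) LM by blast+
    hence "a \<in> K \<union> \<Union>{\<sigma> ` M | \<sigma>. K_embedding K M \<sigma>}" by blast
    thus ?thesis unfolding galois_closure_def by (rule subsetD[OF gen_field_sup])
  qed

  have L'\<gamma>: "?L' = {poly p \<gamma> | p. poly_over K p}" using \<gamma>(2) simple_ext_char[OF K alg] by simp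
  obtain p\<alpha> where p\<alpha>: "poly_over K p\<alpha>" "\<alpha> = poly p\<alpha> \<gamma>" using \<alpha>(1) LL' unfolding L'\<gamma> by blast
  obtain p\<theta> where p\<theta>: "poly_over K p\<theta>" "\<theta> = poly p\<theta> \<gamma>" using \<theta>F FL' unfolding L'\<gamma> by blast
  obtain Q where Q: "poly_over L Q" "\<gamma> = poly Q \<theta>"
    using \<gamma>(1) unfolding L'eq simple_ext_char[OF L algL] by blast
  have Lrep: "L = {poly p \<alpha> | p. poly_over K p}" using \<alpha>(2) simple_ext_char[OF K alg] by simp
  have "\<forall>i. \<exists>q. poly_over K q \<and> coeff Q i = poly q \<alpha>"
    using poly_overD[OF Q(1)] unfolding Lrep by blast
  then obtain qs where qs: "\<And>i. poly_over K (qs i) \<and> coeff Q i = poly (qs i) \<alpha>" by metis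
  define \<Psi> where "\<Psi> a t = (\<Sum>i\<le>degree Q. poly (qs i) a * t ^ i)" for a t
  define P where "P = (\<Sum>i\<le>degree Q. pcompose (qs i) p\<alpha> * p\<theta> ^ i) - [:0, 1:]"
  have PK: "poly_over K P" unfolding P_def using K qs p\<alpha> p\<theta>
    by (intro poly_over_diff poly_over_sum poly_over_mult poly_over_pcompose poly_over_power poly_over_X) auto
  have P\<gamma>: "poly P \<gamma> = 0"
  proof -
    have "poly P \<gamma> = (\<Sum>i\<le>degree Q. poly (qs i) \<alpha> * \<theta> ^ i) - \<gamma>"
      unfolding P_def using p\<alpha>(2) p\<theta>(2) by (simp add: poly_sum poly_pcompose)
    also have "\<dots> = poly Q \<theta> - \<gamma>" using qs by (simp add: poly_altdef)
    finally show ?thesis using Q(2) by simp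
  qed

  define A where "A = {\<beta> \<in> ?M'. poly ?g \<beta> = 0}"
  define B where "B = {a \<in> M. poly ?f a = 0} \<times> {t. poly ?h t = 0}"
  define \<Phi> where "\<Phi> \<beta> = (poly p\<alpha> \<beta>, poly p\<theta> \<beta>)" for \<beta>

  have inv: "\<Psi> (poly p\<alpha> \<beta>) (poly p\<theta> \<beta>) = \<beta>" if "poly ?g \<beta> = 0" for \<beta>
  proof -
    have "poly P \<beta> = 0" using transfer_root[OF K alg\<gamma> PK P\<gamma> that] .
    thus ?thesis unfolding P_def \<Psi>_def by (simp add: poly_sum poly_pcompose)
  qed
  have inj: "inj_on \<Phi> A"
  proof (rule inj_onI)
    fix \<beta>1 \<beta>2 assume a: "\<beta>1 \<in> A" "\<beta>2 \<in> A" "\<Phi> \<beta>1 = \<Phi> \<beta>2"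
    have e: "poly p\<alpha> \<beta>1 = poly p\<alpha> \<beta>2" "poly p\<theta> \<beta>1 = poly p\<theta> \<beta>2" using a(3) unfolding \<Phi>_def by simp_all
    have "\<beta>1 = \<Psi> (poly p\<alpha> \<beta>1) (poly p\<theta> \<beta>1)" using inv a(1) unfolding A_def by simp
    also have "\<dots> = \<Psi> (poly p\<alpha> \<beta>2) (poly p\<theta> \<beta>2)" using e by simp
    also have "\<dots> = \<beta>2" using inv a(2) unfolding A_def by simp
    finally show "\<beta>1 = \<beta>2" .
  qed
  have img1: "\<Phi> ` A \<subseteq> B"
  proof
    fix z assume "z \<in> \<Phi> ` A"
    then obtain \<beta> where b: "\<beta> \<in> ?M'" "poly ?g \<beta> = 0" "z = \<Phi> \<beta>" unfolding A_def by blast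
    have fa: "poly ?f (poly p\<alpha> \<beta>) = 0"
      using transfer_root[OF K alg\<gamma> poly_over_pcompose[OF K fK p\<alpha>(1)] _ b(2)] p\<alpha>(2)
        min_poly_root[OF K alg\<alpha>] by (simp add: poly_pcompose)
    have ht: "poly ?h (poly p\<theta> \<beta>) = 0"
      using transfer_root[OF K alg\<gamma> poly_over_pcompose[OF K hK p\<theta>(1)] _ b(2)] p\<theta>(2)
        min_poly_root[OF K alg\<theta>] by (simp add: poly_pcompose)
    have "poly p\<alpha> \<beta> \<in> ?M'" using poly_in_sf[OF M' poly_over_mono[OF p\<alpha>(1) KM'] b(1)] .
    hence "poly p\<alpha> \<beta> \<in> M" using key rootsN[OF fa] by blast
    thus "z \<in> B" unfolding B_def b(3) \<Phi>_def using fa ht by simp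
  qed
  have img2: "B \<subseteq> \<Phi> ` A"
  proof
    fix z assume "z \<in> B"
    then obtain a t where z: "z = (a, t)" and aM: "a \<in> M" and fa: "poly ?f a = 0" and ht: "poly ?h t = 0"
      unfolding B_def by blast
    obtain \<sigma>1 where s1: "hom_on (gen_field (insert \<alpha> K)) \<sigma>1" "\<forall>x\<in>K. \<sigma>1 x = id x" "\<sigma>1 \<alpha> = a"
      and s1f: "\<forall>p. poly_over K p \<longrightarrow> \<sigma>1 (poly p \<alpha>) = poly (map_poly id p) a"
      using ext_hom[OF K alg hom_on_id, of \<alpha> a] fa by auto
    have s1L: "hom_on L \<sigma>1" using s1(1) \<alpha>(2) by simp
    have s1K: "\<forall>x\<in>K. \<sigma>1 x = x" using s1(2) by simp
    have "map_poly \<sigma>1 (min_poly L \<theta>) = ?h" unfolding hL using map_hom_fix[OF L s1L KL s1K hK] .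
    hence "poly (map_poly \<sigma>1 (min_poly L \<theta>)) t = 0" using ht by simp
    then obtain \<sigma> where s: "hom_on (gen_field (insert \<theta> L)) \<sigma>" "\<forall>x\<in>L. \<sigma> x = \<sigma>1 x" "\<sigma> \<theta> = t"
      and sf: "\<forall>p. poly_over L p \<longrightarrow> \<sigma> (poly p \<theta>) = poly (map_poly \<sigma>1 p) t"
      using ext_hom[OF L algL s1L] by blast
    have sL': "hom_on ?L' \<sigma>" using s(1) L'eq by simp
    have sK: "\<forall>x\<in>K. \<sigma> x = x" using s(2) s1K KL by auto
    define \<beta> where "\<beta> = \<sigma> \<gamma>"
    have "\<beta> = poly (map_poly \<sigma>1 Q) t" unfolding \<beta>_def using sf Q by simp
    also have "\<dots> = (\<Sum>i\<le>degree Q. \<sigma>1 (coeff Q i) * t ^ i)"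
      using degree_map_hom[OF L s1L Q(1)] by (simp add: poly_altdef coeff_map_hom[OF L s1L])
    also have "\<dots> = \<Psi> a t" unfolding \<Psi>_def
    proof (rule sum.cong)
      fix i
      have "\<sigma>1 (coeff Q i) = \<sigma>1 (poly (qs i) \<alpha>)" using qs by simp
      also have "\<dots> = poly (qs i) a" using s1f qs by simp
      finally show "\<sigma>1 (coeff Q i) * t ^ i = poly (qs i) a * t ^ i" by simp
    qed simp
    finally have \<beta>\<Psi>: "\<beta> = \<Psi> a t" .
    have tM': "t \<in> ?M'" using RhF[OF ht] FM' by blast
    have aM': "a \<in> ?M'" using aM MM' by blast
    have qa: "poly (qs i) a \<in> ?M'" for i
      using poly_in_sf[OF M' poly_over_mono[OF conjunct1[OF qs[of i]] KM'] aM'] .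
    have \<beta>M': "\<beta> \<in> ?M'" unfolding \<beta>\<Psi> \<Psi>_def
      by (rule sf_sum[OF M'], rule sf_mult[OF M' qa sf_power[OF M' tM']])
    have "poly ?g \<beta> = \<sigma> (poly ?g \<gamma>)" unfolding \<beta>_def
      using poly_hom_fix[OF L' sL' _ sK min_poly_over[OF K alg\<gamma>] \<gamma>(1)] KL LL' by simp
    hence g\<beta>: "poly ?g \<beta> = 0" using min_poly_root[OF K alg\<gamma>] hom_0[OF L' sL'] by simp
    have "poly p\<alpha> \<beta> = \<sigma> (poly p\<alpha> \<gamma>)" unfolding \<beta>_def
      using poly_hom_fix[OF L' sL' _ sK p\<alpha>(1) \<gamma>(1)] KL LL' by simp
    hence "poly p\<alpha> \<beta> = a" using p\<alpha>(2) s(2) s1(3) \<alpha>(1) by simp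
    moreover have "poly p\<theta> \<beta> = \<sigma> (poly p\<theta> \<gamma>)" unfolding \<beta>_def
      using poly_hom_fix[OF L' sL' _ sK p\<theta>(1) \<gamma>(1)] KL LL' by simp
    hence "poly p\<theta> \<beta> = t" using p\<theta>(2) s(3) by simp
    ultimately have "\<Phi> \<beta> = z" unfolding \<Phi>_def z by simp
    moreover have "\<beta> \<in> A" unfolding A_def using \<beta>M' g\<beta> by simp
    ultimately show "z \<in> \<Phi> ` A" by blast
  qed
  have "card A = card B" using card_image[OF inj] img1 img2 by (metis subset_antisym)
  also have "\<dots> = card {a \<in> M. poly ?f a = 0} * d" unfolding B_def using cardRh by (simp add: card_cartesian_product)
  finally have cA: "card A = card {a \<in> M. poly ?f a = 0} * d" .
  have "root_capacity K ?M' ?L' = card A" unfolding root_capacity_def Let_def A_def \<gamma>_def ..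
  moreover have "root_capacity K M L = card {a \<in> M. poly ?f a = 0}" unfolding root_capacity_def Let_def \<alpha>_def ..
  ultimately show ?thesis using cA by simp
qed

end
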